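(* Let $\mu=-1$, $p_{0x}=p_{01}=p_{x1}=-7$, and let $\nu>0$, $d$ be the corresponding integration constants (normalized with $0\le\Re d\le\pi$). Then $\frac{\Im d}{\nu}=\frac\pi2$. Consequently the first approximation $$y_1(x)=\frac{(3-2i\nu)^2}{16\nu^2}e^{-2id}x^{-2i\nu}-\frac{9-4\nu^2}{8\nu^2}+\frac{(3+2i\nu)^2}{16\nu^2}e^{2id}x^{2i\nu}$$ has two infinite sequences of zeros in $D_0=\{x:|x|\le|x_0(1)|\}$, $|x_0(1)|=2.91\ldots\times10^{-2}$, accumulating at $x=0$ along the negative imaginary axis: $$x_k(1)=\exp\{-i\tfrac\pi2\}\exp\Big\{-\frac{\Re d}\nu-\frac{k\pi}\nu\Big\},\qquad x_k(2)=x_k(1)\exp\Big\{-\frac i\nu\ln\frac{3-2i\nu}{3+2i\nu}\Big\}=x_k(1)\exp\Big\{\frac1\nu\arg\frac{3-2i\nu}{3+2i\nu}\Big\},\qquad k\in\mathbb N.$$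
   Context: For $PVI_\mu$ (the Painlevé VI equation with parameters $\alpha=(2\mu-1)^2/2$, $\beta=\gamma=0$, $\delta=1/2$), branches near $x=0$ of the form $\frac1{y(x)}=\sum_{n\ge1}x^{n-1}\sum_{m=-n}^nA_{nm}(\nu,\mu)e^{2imd}x^{2im\nu}$ (with $\nu>0$, $d\in\mathbb C$, $x^{2im\nu}=e^{2im\nu\log x}$) correspond to monodromy data $(\mu,p_{0x},p_{01},p_{x1})$ of the associated isomonodromic Fuchsian system with $p_{0x}<-2$; the integration constants are given by $p_{0x}=-2\cosh(2\pi\nu)$, $\nu>0$, and $$d=\frac i2\ln\Big\{-\frac{4\cdot16^{2i\nu}\,\Gamma(\frac32-\mu-i\nu)^2\,\Gamma(\mu+\frac12-i\nu)^2}{(2\nu+i(1-2\mu))^2\nu^2\sinh(2\pi\nu)^2\Gamma(-i\nu)^4}\Big[\tfrac12\big(e^{2\pi\nu}p_{x1}-p_{01}\big)\sinh(2\pi\nu)+\big(\cos(2\pi\mu)+1\big)\big(e^{2\pi\nu}+1\big)\Big]\Big\}$$ modulo $\pi$. The case $\mu=-1$, $p_{0x}=p_{01}=p_{x1}=-7$ is the branch associated with the quantum cohomology of $\mathbb{CP}^2$; the displayed $y_1$ is the $n=1$ term of the series for this $\mu$. *)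

theory Defs
  imports "HOL-Analysis.Analysis"
begin

definition cpow :: "complex \<Rightarrow> complex \<Rightarrow> complex" where
  "cpow x s = exp (s * Ln x)"

text \<open>The argument of the logarithm in the formula for the integration constant d
  (depends on mu, p01, px1 and nu, where p0x = -2 cosh(2 pi nu)).\<close>
definition d_argument :: "real \<Rightarrow> real \<Rightarrow> real \<Rightarrow> real \<Rightarrow> complex" where
  "d_argument mu p01 px1 nu =
     - (4 * exp (2 * \<i> * of_real nu * of_real (ln 16))
          * Gamma (3/2 - of_real mu - \<i> * of_real nu) ^ 2
          * Gamma (of_real mu + 1/2 - \<i> * of_real nu) ^ 2)
       / ((2 * of_real nu + \<i> * (1 - 2 * of_real mu)) ^ 2 * of_real nu ^ 2
          * of_real (sinh (2 * pi * nu)) ^ 2 * Gamma (- \<i> * of_real nu) ^ 4)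
     * of_real (1/2 * (exp (2 * pi * nu) * px1 - p01) * sinh (2 * pi * nu)
                + (cos (2 * pi * mu) + 1) * (exp (2 * pi * nu) + 1))"

definition is_integration_constant_d :: "real \<Rightarrow> real \<Rightarrow> real \<Rightarrow> real \<Rightarrow> complex \<Rightarrow> bool" where
  "is_integration_constant_d mu p01 px1 nu d \<longleftrightarrow>
     (\<exists>n::int. d = \<i> / 2 * Ln (d_argument mu p01 px1 nu) + of_int n * of_real pi)"

definition y1 :: "real \<Rightarrow> complex \<Rightarrow> complex \<Rightarrow> complex" where
  "y1 nu d x =
     (3 - 2 * \<i> * of_real nu) ^ 2 / (16 * of_real nu ^ 2) * exp (- 2 * \<i> * d) * cpow x (- 2 * \<i> * of_real nu)
     - (9 - 4 * of_real nu ^ 2) / (8 * of_real nu ^ 2)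
     + (3 + 2 * \<i> * of_real nu) ^ 2 / (16 * of_real nu ^ 2) * exp (2 * \<i> * d) * cpow x (2 * \<i> * of_real nu)"

definition zero_seq1 :: "real \<Rightarrow> complex \<Rightarrow> nat \<Rightarrow> complex" where
  "zero_seq1 nu d k = exp (- \<i> * of_real pi / 2) * exp (of_real (- Re d / nu - real k * pi / nu))"

definition zero_seq2 :: "real \<Rightarrow> complex \<Rightarrow> nat \<Rightarrow> complex" where
  "zero_seq2 nu d k = zero_seq1 nu d k
     * exp (- \<i> / of_real nu * Ln ((3 - 2 * \<i> * of_real nu) / (3 + 2 * \<i> * of_real nu)))"

end

theory Submission
  imports Defs
begin


lemma exp_upper_taylor:
  fixes x :: real assumes "0 \<le> x" "x^n / fact n < 1"
  shows "exp x \<le> (\<Sum>m<n. x^m / fact m) / (1 - x^n / fact n)"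
proof -
  obtain t where t: "\<bar>t\<bar> \<le> \<bar>x\<bar>" "exp x = (\<Sum>m<n. x^m / fact m) + exp t / fact n * x^n"
    using Maclaurin_exp_le by blast
  have "t \<le> x" using t(1) assms by arith
  hence "exp t \<le> exp x" by simp
  hence "exp t / fact n * x^n \<le> exp x * (x^n / fact n)" using assms
    by (simp add: divide_right_mono mult_right_mono)
  hence "exp x \<le> (\<Sum>m<n. x^m / fact m) + exp x * (x^n / fact n)" using t(2) by linarith
  hence "exp x * (1 - x^n/fact n) \<le> (\<Sum>m<n. x^m / fact m)" by (simp add: algebra_simps)
  thus ?thesis using assms by (simp add: pos_le_divide_eq)
qed

lemma exp_lower_taylor:
  fixes x :: real assumes "0 \<le> x"
  shows "(\<Sum>m<n. x^m / fact m) \<le> exp x"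
proof -
  obtain t where t: "\<bar>t\<bar> \<le> \<bar>x\<bar>" "exp x = (\<Sum>m<n. x^m / fact m) + exp t / fact n * x^n"
    using Maclaurin_exp_le by blast
  thus ?thesis using assms by simp
qed

lemma arctan_lower3:
  fixes x :: real assumes "0 \<le> x" shows "x - x^3/3 \<le> arctan x"
proof -
  have "(\<lambda>y. arctan y - (y - y^3/3)) 0 \<le> (\<lambda>y. arctan y - (y - y^3/3)) x"
  proof (rule DERIV_nonneg_imp_nondecreasing[OF assms])
    fix y :: real assume "0 \<le> y" "y \<le> x"
    have "DERIV (\<lambda>y. arctan y - (y - y^3/3)) y :> inverse (1 + y\<^sup>2) - (1 - y^2)"
      by (auto intro!: derivative_eq_intros simp: power2_eq_square power3_eq_cube)
    moreover have "inverse (1 + y\<^sup>2) - (1 - y^2) \<ge> 0"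
    proof -
      have h: "1 \<ge> (1 - y^2) * (1 + y^2)" using \<open>0 \<le> y\<close> by (auto simp: algebra_simps power2_eq_square intro!: mult_nonneg_nonneg)
      moreover have pos: "0 < 1 + y^2" by (simp add: add_pos_nonneg)
      have "1 - y^2 \<le> inverse (1+y^2)" if "1 \<ge> (1 - y^2) * (1 + y^2)"
        using that pos by (simp add: inverse_eq_divide pos_le_divide_eq)
      moreover have "inverse (1+y^2) \<le> 1 - y^2 + y^4" if "(1 - y^2 + y^4) * (1 + y^2) \<ge> 1"
        using that pos by (simp add: inverse_eq_divide pos_divide_le_eq)
      ultimately show ?thesis using h by force
    qed
    ultimately show "\<exists>d. DERIV (\<lambda>y. arctan y - (y - y^3/3)) y :> d \<and> d \<ge> 0" by blast
  qed
  thus ?thesis by simp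
qed

lemma arctan_upper5:
  fixes x :: real assumes "0 \<le> x" shows "arctan x \<le> x - x^3/3 + x^5/5"
proof -
  have "(\<lambda>y. (y - y^3/3 + y^5/5) - arctan y) 0 \<le> (\<lambda>y. (y - y^3/3 + y^5/5) - arctan y) x"
  proof (rule DERIV_nonneg_imp_nondecreasing[OF assms])
    fix y :: real assume "0 \<le> y" "y \<le> x"
    have "DERIV (\<lambda>y. (y - y^3/3 + y^5/5) - arctan y) y :> (1 - y^2 + y^4) - inverse (1 + y\<^sup>2)"
      by (auto intro!: derivative_eq_intros simp: power2_eq_square power3_eq_cube numeral_eq_Suc)
    moreover have "(1 - y^2 + y^4) - inverse (1 + y\<^sup>2) \<ge> 0"
    proof -
      have h: "(1 - y^2 + y^4) * (1 + y^2) \<ge> 1"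
        using \<open>0 \<le> y\<close> by (auto simp: algebra_simps power2_eq_square numeral_eq_Suc intro!: mult_nonneg_nonneg)
      moreover have pos: "0 < 1 + y^2" by (simp add: add_pos_nonneg)
      have "1 - y^2 \<le> inverse (1+y^2)" if "1 \<ge> (1 - y^2) * (1 + y^2)"
        using that pos by (simp add: inverse_eq_divide pos_le_divide_eq)
      moreover have "inverse (1+y^2) \<le> 1 - y^2 + y^4" if "(1 - y^2 + y^4) * (1 + y^2) \<ge> 1"
        using that pos by (simp add: inverse_eq_divide pos_divide_le_eq)
      ultimately show ?thesis using h by force
    qed
    ultimately show "\<exists>d. DERIV (\<lambda>y. (y - y^3/3 + y^5/5) - arctan y) y :> d \<and> d \<ge> 0" by blast
  qed
  thus ?thesis by simp
qed

lemma arctan_lo: "0 \<le> (q::real) \<Longrightarrow> q \<le> t \<Longrightarrow> q - q^3/3 \<le> arctan t"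
  using arctan_lower3[of q] arctan_monotone'[of q t] by linarith

lemma arctan_hi: "0 \<le> (t::real) \<Longrightarrow> t \<le> Q \<Longrightarrow> arctan t \<le> Q - Q^3/3 + Q^5/5"
  using arctan_upper5[of Q] arctan_monotone'[of t Q] by linarith

definition tt :: "real \<Rightarrow> real \<Rightarrow> real" where
  "tt nu k = nu*(k+1/2+2*nu^2)/((k+1)*(k+1/2)^2+nu^2*(3*k+1))"

lemma tt_bounds:
  fixes k a b nu :: real
  assumes "0 \<le> k" "0 < a" "a \<le> nu" "nu \<le> b"
  shows "a*(k+1/2+2*a^2)/((k+1)*(k+1/2)^2+b^2*(3*k+1)) \<le> tt nu k"
    and "tt nu k \<le> b*(k+1/2+2*b^2)/((k+1)*(k+1/2)^2+a^2*(3*k+1))"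
proof -
  have a2: "a^2 \<le> nu^2" "nu^2 \<le> b^2" using assms by (auto intro: power_mono)
  have p: "0 < (k+1)*(k+1/2)^2" using assms by simp
  show "a*(k+1/2+2*a^2)/((k+1)*(k+1/2)^2+b^2*(3*k+1)) \<le> tt nu k"
    unfolding tt_def
    apply (rule frac_le)
    using assms a2 p by (auto intro!: mult_mono add_mono add_pos_nonneg mult_nonneg_nonneg)
  show "tt nu k \<le> b*(k+1/2+2*b^2)/((k+1)*(k+1/2)^2+a^2*(3*k+1))"
    unfolding tt_def
    apply (rule frac_le)
    using assms a2 p by (auto intro!: mult_mono add_mono add_pos_nonneg mult_nonneg_nonneg)
qed

lemma at1: assumes "30634/100000 \<le> nu" "nu \<le> 30636/100000"
  shows "0.10564584 \<le> arctan (tt nu 1) \<and> arctan (tt nu 1) \<le> 0.10565797"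
proof -
  have b1: "30634/100000*(1+1/2+2*(30634/100000)^2)/((1+1)*(1+1/2)^2+(30636/100000)^2*(3*1+1)) \<le> tt nu 1"
    by (rule tt_bounds(1); use assms in simp)
  have b2: "tt nu 1 \<le> 30636/100000*(1+1/2+2*(30636/100000)^2)/((1+1)*(1+1/2)^2+(30634/100000)^2*(3*1+1))"
    by (rule tt_bounds(2); use assms in simp)
  have q1: "(0.10604334::real) \<le> 30634/100000*(1+1/2+2*(30634/100000)^2)/((1+1)*(1+1/2)^2+(30636/100000)^2*(3*1+1))"
    by (simp add: divide_simps power_divide)
  have q2: "30636/100000*(1+1/2+2*(30636/100000)^2)/((1+1)*(1+1/2)^2+(30634/100000)^2*(3*1+1)) \<le> (0.10605288::real)"
    by (simp add: divide_simps power_divide)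
  have t0: "0 \<le> tt nu 1" using assms unfolding tt_def by (intro divide_nonneg_pos) (simp_all add: add_pos_nonneg)
  have "0.10604334 - 0.10604334^3/3 \<le> arctan (tt nu 1)" apply (rule arctan_lo) apply simp using b1 q1 by linarith
  moreover have "arctan (tt nu 1) \<le> 0.10605288 - 0.10605288^3/3 + 0.10605288^5/5" apply (rule arctan_hi) using b2 q2 t0 by linarith+
  moreover have "(0.10564584::real) \<le> 0.10604334 - 0.10604334^3/3" by (simp add: power_divide)
  moreover have "0.10605288 - 0.10605288^3/3 + 0.10605288^5/5 \<le> (0.10565797::real)" by (simp add: power_divide)
  ultimately show ?thesis by linarith
qed

lemma at2: assumes "30634/100000 \<le> nu" "nu \<le> 30636/100000"
  shows "0.04239978 \<le> arctan (tt nu 2) \<and> arctan (tt nu 2) \<le> 0.04240316"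
proof -
  have b1: "30634/100000*(2+1/2+2*(30634/100000)^2)/((2+1)*(2+1/2)^2+(30636/100000)^2*(3*2+1)) \<le> tt nu 2"
    by (rule tt_bounds(1); use assms in simp)
  have b2: "tt nu 2 \<le> 30636/100000*(2+1/2+2*(30636/100000)^2)/((2+1)*(2+1/2)^2+(30634/100000)^2*(3*2+1))"
    by (rule tt_bounds(2); use assms in simp)
  have q1: "(0.04242524::real) \<le> 30634/100000*(2+1/2+2*(30634/100000)^2)/((2+1)*(2+1/2)^2+(30636/100000)^2*(3*2+1))"
    by (simp add: divide_simps power_divide)
  have q2: "30636/100000*(2+1/2+2*(30636/100000)^2)/((2+1)*(2+1/2)^2+(30634/100000)^2*(3*2+1)) \<le> (0.04242859::real)"
    by (simp add: divide_simps power_divide)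
  have t0: "0 \<le> tt nu 2" using assms unfolding tt_def by (intro divide_nonneg_pos) (simp_all add: add_pos_nonneg)
  have "0.04242524 - 0.04242524^3/3 \<le> arctan (tt nu 2)" apply (rule arctan_lo) apply simp using b1 q1 by linarith
  moreover have "arctan (tt nu 2) \<le> 0.04242859 - 0.04242859^3/3 + 0.04242859^5/5" apply (rule arctan_hi) using b2 q2 t0 by linarith+
  moreover have "(0.04239978::real) \<le> 0.04242524 - 0.04242524^3/3" by (simp add: power_divide)
  moreover have "0.04242859 - 0.04242859^3/3 + 0.04242859^5/5 \<le> (0.04240316::real)" by (simp add: power_divide)
  ultimately show ?thesis by linarith
qed

lemma at3: assumes "30634/100000 \<le> nu" "nu \<le> 30636/100000"
  shows "0.02261766 \<le> arctan (tt nu 3) \<and> arctan (tt nu 3) \<le> 0.02261936"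
proof -
  have b1: "30634/100000*(3+1/2+2*(30634/100000)^2)/((3+1)*(3+1/2)^2+(30636/100000)^2*(3*3+1)) \<le> tt nu 3"
    by (rule tt_bounds(1); use assms in simp)
  have b2: "tt nu 3 \<le> 30636/100000*(3+1/2+2*(30636/100000)^2)/((3+1)*(3+1/2)^2+(30634/100000)^2*(3*3+1))"
    by (rule tt_bounds(2); use assms in simp)
  have q1: "(0.02262152::real) \<le> 30634/100000*(3+1/2+2*(30634/100000)^2)/((3+1)*(3+1/2)^2+(30636/100000)^2*(3*3+1))"
    by (simp add: divide_simps power_divide)
  have q2: "30636/100000*(3+1/2+2*(30636/100000)^2)/((3+1)*(3+1/2)^2+(30634/100000)^2*(3*3+1)) \<le> (0.02262321::real)"
    by (simp add: divide_simps power_divide)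
  have t0: "0 \<le> tt nu 3" using assms unfolding tt_def by (intro divide_nonneg_pos) (simp_all add: add_pos_nonneg)
  have "0.02262152 - 0.02262152^3/3 \<le> arctan (tt nu 3)" apply (rule arctan_lo) apply simp using b1 q1 by linarith
  moreover have "arctan (tt nu 3) \<le> 0.02262321 - 0.02262321^3/3 + 0.02262321^5/5" apply (rule arctan_hi) using b2 q2 t0 by linarith+
  moreover have "(0.02261766::real) \<le> 0.02262152 - 0.02262152^3/3" by (simp add: power_divide)
  moreover have "0.02262321 - 0.02262321^3/3 + 0.02262321^5/5 \<le> (0.02261936::real)" by (simp add: power_divide)
  ultimately show ?thesis by linarith
qed

lemma at4: assumes "30634/100000 \<le> nu" "nu \<le> 30636/100000"
  shows "0.01401317 \<le> arctan (tt nu 4) \<and> arctan (tt nu 4) \<le> 0.01401420"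
proof -
  have b1: "30634/100000*(4+1/2+2*(30634/100000)^2)/((4+1)*(4+1/2)^2+(30636/100000)^2*(3*4+1)) \<le> tt nu 4"
    by (rule tt_bounds(1); use assms in simp)
  have b2: "tt nu 4 \<le> 30636/100000*(4+1/2+2*(30636/100000)^2)/((4+1)*(4+1/2)^2+(30634/100000)^2*(3*4+1))"
    by (rule tt_bounds(2); use assms in simp)
  have q1: "(0.01401409::real) \<le> 30634/100000*(4+1/2+2*(30634/100000)^2)/((4+1)*(4+1/2)^2+(30636/100000)^2*(3*4+1))"
    by (simp add: divide_simps power_divide)
  have q2: "30636/100000*(4+1/2+2*(30636/100000)^2)/((4+1)*(4+1/2)^2+(30634/100000)^2*(3*4+1)) \<le> (0.01401511::real)"
    by (simp add: divide_simps power_divide)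
  have t0: "0 \<le> tt nu 4" using assms unfolding tt_def by (intro divide_nonneg_pos) (simp_all add: add_pos_nonneg)
  have "0.01401409 - 0.01401409^3/3 \<le> arctan (tt nu 4)" apply (rule arctan_lo) apply simp using b1 q1 by linarith
  moreover have "arctan (tt nu 4) \<le> 0.01401511 - 0.01401511^3/3 + 0.01401511^5/5" apply (rule arctan_hi) using b2 q2 t0 by linarith+
  moreover have "(0.01401317::real) \<le> 0.01401409 - 0.01401409^3/3" by (simp add: power_divide)
  moreover have "0.01401511 - 0.01401511^3/3 + 0.01401511^5/5 \<le> (0.01401420::real)" by (simp add: power_divide)
  ultimately show ?thesis by linarith
qed

lemma at5: assumes "30634/100000 \<le> nu" "nu \<le> 30636/100000"
  shows "0.00952074 \<le> arctan (tt nu 5) \<and> arctan (tt nu 5) \<le> 0.00952144"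
proof -
  have b1: "30634/100000*(5+1/2+2*(30634/100000)^2)/((5+1)*(5+1/2)^2+(30636/100000)^2*(3*5+1)) \<le> tt nu 5"
    by (rule tt_bounds(1); use assms in simp)
  have b2: "tt nu 5 \<le> 30636/100000*(5+1/2+2*(30636/100000)^2)/((5+1)*(5+1/2)^2+(30634/100000)^2*(3*5+1))"
    by (rule tt_bounds(2); use assms in simp)
  have q1: "(0.00952103::real) \<le> 30634/100000*(5+1/2+2*(30634/100000)^2)/((5+1)*(5+1/2)^2+(30636/100000)^2*(3*5+1))"
    by (simp add: divide_simps power_divide)
  have q2: "30636/100000*(5+1/2+2*(30636/100000)^2)/((5+1)*(5+1/2)^2+(30634/100000)^2*(3*5+1)) \<le> (0.00952172::real)"
    by (simp add: divide_simps power_divide)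
  have t0: "0 \<le> tt nu 5" using assms unfolding tt_def by (intro divide_nonneg_pos) (simp_all add: add_pos_nonneg)
  have "0.00952103 - 0.00952103^3/3 \<le> arctan (tt nu 5)" apply (rule arctan_lo) apply simp using b1 q1 by linarith
  moreover have "arctan (tt nu 5) \<le> 0.00952172 - 0.00952172^3/3 + 0.00952172^5/5" apply (rule arctan_hi) using b2 q2 t0 by linarith+
  moreover have "(0.00952074::real) \<le> 0.00952103 - 0.00952103^3/3" by (simp add: power_divide)
  moreover have "0.00952172 - 0.00952172^3/3 + 0.00952172^5/5 \<le> (0.00952144::real)" by (simp add: power_divide)
  ultimately show ?thesis by linarith
qed

lemma at6: assumes "30634/100000 \<le> nu" "nu \<le> 30636/100000"
  shows "0.00688552 \<le> arctan (tt nu 6) \<and> arctan (tt nu 6) \<le> 0.00688602"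
proof -
  have b1: "30634/100000*(6+1/2+2*(30634/100000)^2)/((6+1)*(6+1/2)^2+(30636/100000)^2*(3*6+1)) \<le> tt nu 6"
    by (rule tt_bounds(1); use assms in simp)
  have b2: "tt nu 6 \<le> 30636/100000*(6+1/2+2*(30636/100000)^2)/((6+1)*(6+1/2)^2+(30634/100000)^2*(3*6+1))"
    by (rule tt_bounds(2); use assms in simp)
  have q1: "(0.00688563::real) \<le> 30634/100000*(6+1/2+2*(30634/100000)^2)/((6+1)*(6+1/2)^2+(30636/100000)^2*(3*6+1))"
    by (simp add: divide_simps power_divide)
  have q2: "30636/100000*(6+1/2+2*(30636/100000)^2)/((6+1)*(6+1/2)^2+(30634/100000)^2*(3*6+1)) \<le> (0.00688612::real)"
    by (simp add: divide_simps power_divide)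
  have t0: "0 \<le> tt nu 6" using assms unfolding tt_def by (intro divide_nonneg_pos) (simp_all add: add_pos_nonneg)
  have "0.00688563 - 0.00688563^3/3 \<le> arctan (tt nu 6)" apply (rule arctan_lo) apply simp using b1 q1 by linarith
  moreover have "arctan (tt nu 6) \<le> 0.00688612 - 0.00688612^3/3 + 0.00688612^5/5" apply (rule arctan_hi) using b2 q2 t0 by linarith+
  moreover have "(0.00688552::real) \<le> 0.00688563 - 0.00688563^3/3" by (simp add: power_divide)
  moreover have "0.00688612 - 0.00688612^3/3 + 0.00688612^5/5 \<le> (0.00688602::real)" by (simp add: power_divide)
  ultimately show ?thesis by linarith
qed

lemma at7: assumes "30634/100000 \<le> nu" "nu \<le> 30636/100000"
  shows "0.00520948 \<le> arctan (tt nu 7) \<and> arctan (tt nu 7) \<le> 0.00520986"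
proof -
  have b1: "30634/100000*(7+1/2+2*(30634/100000)^2)/((7+1)*(7+1/2)^2+(30636/100000)^2*(3*7+1)) \<le> tt nu 7"
    by (rule tt_bounds(1); use assms in simp)
  have b2: "tt nu 7 \<le> 30636/100000*(7+1/2+2*(30636/100000)^2)/((7+1)*(7+1/2)^2+(30634/100000)^2*(3*7+1))"
    by (rule tt_bounds(2); use assms in simp)
  have q1: "(0.00520953::real) \<le> 30634/100000*(7+1/2+2*(30634/100000)^2)/((7+1)*(7+1/2)^2+(30636/100000)^2*(3*7+1))"
    by (simp add: divide_simps power_divide)
  have q2: "30636/100000*(7+1/2+2*(30636/100000)^2)/((7+1)*(7+1/2)^2+(30634/100000)^2*(3*7+1)) \<le> (0.00520990::real)"
    by (simp add: divide_simps power_divide)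
  have t0: "0 \<le> tt nu 7" using assms unfolding tt_def by (intro divide_nonneg_pos) (simp_all add: add_pos_nonneg)
  have "0.00520953 - 0.00520953^3/3 \<le> arctan (tt nu 7)" apply (rule arctan_lo) apply simp using b1 q1 by linarith
  moreover have "arctan (tt nu 7) \<le> 0.00520990 - 0.00520990^3/3 + 0.00520990^5/5" apply (rule arctan_hi) using b2 q2 t0 by linarith+
  moreover have "(0.00520948::real) \<le> 0.00520953 - 0.00520953^3/3" by (simp add: power_divide)
  moreover have "0.00520990 - 0.00520990^3/3 + 0.00520990^5/5 \<le> (0.00520986::real)" by (simp add: power_divide)
  ultimately show ?thesis by linarith
qed

lemma at8: assumes "30634/100000 \<le> nu" "nu \<le> 30636/100000"
  shows "0.00407812 \<le> arctan (tt nu 8) \<and> arctan (tt nu 8) \<le> 0.00407842"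
proof -
  have b1: "30634/100000*(8+1/2+2*(30634/100000)^2)/((8+1)*(8+1/2)^2+(30636/100000)^2*(3*8+1)) \<le> tt nu 8"
    by (rule tt_bounds(1); use assms in simp)
  have b2: "tt nu 8 \<le> 30636/100000*(8+1/2+2*(30636/100000)^2)/((8+1)*(8+1/2)^2+(30634/100000)^2*(3*8+1))"
    by (rule tt_bounds(2); use assms in simp)
  have q1: "(0.00407815::real) \<le> 30634/100000*(8+1/2+2*(30634/100000)^2)/((8+1)*(8+1/2)^2+(30636/100000)^2*(3*8+1))"
    by (simp add: divide_simps power_divide)
  have q2: "30636/100000*(8+1/2+2*(30636/100000)^2)/((8+1)*(8+1/2)^2+(30634/100000)^2*(3*8+1)) \<le> (0.00407844::real)"
    by (simp add: divide_simps power_divide)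
  have t0: "0 \<le> tt nu 8" using assms unfolding tt_def by (intro divide_nonneg_pos) (simp_all add: add_pos_nonneg)
  have "0.00407815 - 0.00407815^3/3 \<le> arctan (tt nu 8)" apply (rule arctan_lo) apply simp using b1 q1 by linarith
  moreover have "arctan (tt nu 8) \<le> 0.00407844 - 0.00407844^3/3 + 0.00407844^5/5" apply (rule arctan_hi) using b2 q2 t0 by linarith+
  moreover have "(0.00407812::real) \<le> 0.00407815 - 0.00407815^3/3" by (simp add: power_divide)
  moreover have "0.00407844 - 0.00407844^3/3 + 0.00407844^5/5 \<le> (0.00407842::real)" by (simp add: power_divide)
  ultimately show ?thesis by linarith
qed

lemma at9: assumes "30634/100000 \<le> nu" "nu \<le> 30636/100000"
  shows "0.00327877 \<le> arctan (tt nu 9) \<and> arctan (tt nu 9) \<le> 0.00327901"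
proof -
  have b1: "30634/100000*(9+1/2+2*(30634/100000)^2)/((9+1)*(9+1/2)^2+(30636/100000)^2*(3*9+1)) \<le> tt nu 9"
    by (rule tt_bounds(1); use assms in simp)
  have b2: "tt nu 9 \<le> 30636/100000*(9+1/2+2*(30636/100000)^2)/((9+1)*(9+1/2)^2+(30634/100000)^2*(3*9+1))"
    by (rule tt_bounds(2); use assms in simp)
  have q1: "(0.00327879::real) \<le> 30634/100000*(9+1/2+2*(30634/100000)^2)/((9+1)*(9+1/2)^2+(30636/100000)^2*(3*9+1))"
    by (simp add: divide_simps power_divide)
  have q2: "30636/100000*(9+1/2+2*(30636/100000)^2)/((9+1)*(9+1/2)^2+(30634/100000)^2*(3*9+1)) \<le> (0.00327902::real)"
    by (simp add: divide_simps power_divide)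
  have t0: "0 \<le> tt nu 9" using assms unfolding tt_def by (intro divide_nonneg_pos) (simp_all add: add_pos_nonneg)
  have "0.00327879 - 0.00327879^3/3 \<le> arctan (tt nu 9)" apply (rule arctan_lo) apply simp using b1 q1 by linarith
  moreover have "arctan (tt nu 9) \<le> 0.00327902 - 0.00327902^3/3 + 0.00327902^5/5" apply (rule arctan_hi) using b2 q2 t0 by linarith+
  moreover have "(0.00327877::real) \<le> 0.00327879 - 0.00327879^3/3" by (simp add: power_divide)
  moreover have "0.00327902 - 0.00327902^3/3 + 0.00327902^5/5 \<le> (0.00327901::real)" by (simp add: power_divide)
  ultimately show ?thesis by linarith
qed

lemma at10: assumes "30634/100000 \<le> nu" "nu \<le> 30636/100000"
  shows "0.00269323 \<le> arctan (tt nu 10) \<and> arctan (tt nu 10) \<le> 0.00269343"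
proof -
  have b1: "30634/100000*(10+1/2+2*(30634/100000)^2)/((10+1)*(10+1/2)^2+(30636/100000)^2*(3*10+1)) \<le> tt nu 10"
    by (rule tt_bounds(1); use assms in simp)
  have b2: "tt nu 10 \<le> 30636/100000*(10+1/2+2*(30636/100000)^2)/((10+1)*(10+1/2)^2+(30634/100000)^2*(3*10+1))"
    by (rule tt_bounds(2); use assms in simp)
  have q1: "(0.00269324::real) \<le> 30634/100000*(10+1/2+2*(30634/100000)^2)/((10+1)*(10+1/2)^2+(30636/100000)^2*(3*10+1))"
    by (simp add: divide_simps power_divide)
  have q2: "30636/100000*(10+1/2+2*(30636/100000)^2)/((10+1)*(10+1/2)^2+(30634/100000)^2*(3*10+1)) \<le> (0.00269343::real)"
    by (simp add: divide_simps power_divide)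
  have t0: "0 \<le> tt nu 10" using assms unfolding tt_def by (intro divide_nonneg_pos) (simp_all add: add_pos_nonneg)
  have "0.00269324 - 0.00269324^3/3 \<le> arctan (tt nu 10)" apply (rule arctan_lo) apply simp using b1 q1 by linarith
  moreover have "arctan (tt nu 10) \<le> 0.00269343 - 0.00269343^3/3 + 0.00269343^5/5" apply (rule arctan_hi) using b2 q2 t0 by linarith+
  moreover have "(0.00269323::real) \<le> 0.00269324 - 0.00269324^3/3" by (simp add: power_divide)
  moreover have "0.00269343 - 0.00269343^3/3 + 0.00269343^5/5 \<le> (0.00269343::real)" by (simp add: power_divide)
  ultimately show ?thesis by linarith
qed

lemma at11: assumes "30634/100000 \<le> nu" "nu \<le> 30636/100000"
  shows "0.00225154 \<le> arctan (tt nu 11) \<and> arctan (tt nu 11) \<le> 0.00225171"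
proof -
  have b1: "30634/100000*(11+1/2+2*(30634/100000)^2)/((11+1)*(11+1/2)^2+(30636/100000)^2*(3*11+1)) \<le> tt nu 11"
    by (rule tt_bounds(1); use assms in simp)
  have b2: "tt nu 11 \<le> 30636/100000*(11+1/2+2*(30636/100000)^2)/((11+1)*(11+1/2)^2+(30634/100000)^2*(3*11+1))"
    by (rule tt_bounds(2); use assms in simp)
  have q1: "(0.00225155::real) \<le> 30634/100000*(11+1/2+2*(30634/100000)^2)/((11+1)*(11+1/2)^2+(30636/100000)^2*(3*11+1))"
    by (simp add: divide_simps power_divide)
  have q2: "30636/100000*(11+1/2+2*(30636/100000)^2)/((11+1)*(11+1/2)^2+(30634/100000)^2*(3*11+1)) \<le> (0.00225171::real)"
    by (simp add: divide_simps power_divide)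
  have t0: "0 \<le> tt nu 11" using assms unfolding tt_def by (intro divide_nonneg_pos) (simp_all add: add_pos_nonneg)
  have "0.00225155 - 0.00225155^3/3 \<le> arctan (tt nu 11)" apply (rule arctan_lo) apply simp using b1 q1 by linarith
  moreover have "arctan (tt nu 11) \<le> 0.00225171 - 0.00225171^3/3 + 0.00225171^5/5" apply (rule arctan_hi) using b2 q2 t0 by linarith+
  moreover have "(0.00225154::real) \<le> 0.00225155 - 0.00225155^3/3" by (simp add: power_divide)
  moreover have "0.00225171 - 0.00225171^3/3 + 0.00225171^5/5 \<le> (0.00225171::real)" by (simp add: power_divide)
  ultimately show ?thesis by linarith
qed

lemma at12: assumes "30634/100000 \<le> nu" "nu \<le> 30636/100000"
  shows "0.00191019 \<le> arctan (tt nu 12) \<and> arctan (tt nu 12) \<le> 0.00191034"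
proof -
  have b1: "30634/100000*(12+1/2+2*(30634/100000)^2)/((12+1)*(12+1/2)^2+(30636/100000)^2*(3*12+1)) \<le> tt nu 12"
    by (rule tt_bounds(1); use assms in simp)
  have b2: "tt nu 12 \<le> 30636/100000*(12+1/2+2*(30636/100000)^2)/((12+1)*(12+1/2)^2+(30634/100000)^2*(3*12+1))"
    by (rule tt_bounds(2); use assms in simp)
  have q1: "(0.00191020::real) \<le> 30634/100000*(12+1/2+2*(30634/100000)^2)/((12+1)*(12+1/2)^2+(30636/100000)^2*(3*12+1))"
    by (simp add: divide_simps power_divide)
  have q2: "30636/100000*(12+1/2+2*(30636/100000)^2)/((12+1)*(12+1/2)^2+(30634/100000)^2*(3*12+1)) \<le> (0.00191034::real)"
    by (simp add: divide_simps power_divide)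
  have t0: "0 \<le> tt nu 12" using assms unfolding tt_def by (intro divide_nonneg_pos) (simp_all add: add_pos_nonneg)
  have "0.00191020 - 0.00191020^3/3 \<le> arctan (tt nu 12)" apply (rule arctan_lo) apply simp using b1 q1 by linarith
  moreover have "arctan (tt nu 12) \<le> 0.00191034 - 0.00191034^3/3 + 0.00191034^5/5" apply (rule arctan_hi) using b2 q2 t0 by linarith+
  moreover have "(0.00191019::real) \<le> 0.00191020 - 0.00191020^3/3" by (simp add: power_divide)
  moreover have "0.00191034 - 0.00191034^3/3 + 0.00191034^5/5 \<le> (0.00191034::real)" by (simp add: power_divide)
  ultimately show ?thesis by linarith
qed

lemma at13: assumes "30634/100000 \<le> nu" "nu \<le> 30636/100000"
  shows "0.00164095 \<le> arctan (tt nu 13) \<and> arctan (tt nu 13) \<le> 0.00164108"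
proof -
  have b1: "30634/100000*(13+1/2+2*(30634/100000)^2)/((13+1)*(13+1/2)^2+(30636/100000)^2*(3*13+1)) \<le> tt nu 13"
    by (rule tt_bounds(1); use assms in simp)
  have b2: "tt nu 13 \<le> 30636/100000*(13+1/2+2*(30636/100000)^2)/((13+1)*(13+1/2)^2+(30634/100000)^2*(3*13+1))"
    by (rule tt_bounds(2); use assms in simp)
  have q1: "(0.00164096::real) \<le> 30634/100000*(13+1/2+2*(30634/100000)^2)/((13+1)*(13+1/2)^2+(30636/100000)^2*(3*13+1))"
    by (simp add: divide_simps power_divide)
  have q2: "30636/100000*(13+1/2+2*(30636/100000)^2)/((13+1)*(13+1/2)^2+(30634/100000)^2*(3*13+1)) \<le> (0.00164108::real)"
    by (simp add: divide_simps power_divide)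
  have t0: "0 \<le> tt nu 13" using assms unfolding tt_def by (intro divide_nonneg_pos) (simp_all add: add_pos_nonneg)
  have "0.00164096 - 0.00164096^3/3 \<le> arctan (tt nu 13)" apply (rule arctan_lo) apply simp using b1 q1 by linarith
  moreover have "arctan (tt nu 13) \<le> 0.00164108 - 0.00164108^3/3 + 0.00164108^5/5" apply (rule arctan_hi) using b2 q2 t0 by linarith+
  moreover have "(0.00164095::real) \<le> 0.00164096 - 0.00164096^3/3" by (simp add: power_divide)
  moreover have "0.00164108 - 0.00164108^3/3 + 0.00164108^5/5 \<le> (0.00164108::real)" by (simp add: power_divide)
  ultimately show ?thesis by linarith
qed

lemma at14: assumes "30634/100000 \<le> nu" "nu \<le> 30636/100000"
  shows "0.00142485 \<le> arctan (tt nu 14) \<and> arctan (tt nu 14) \<le> 0.00142497"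
proof -
  have b1: "30634/100000*(14+1/2+2*(30634/100000)^2)/((14+1)*(14+1/2)^2+(30636/100000)^2*(3*14+1)) \<le> tt nu 14"
    by (rule tt_bounds(1); use assms in simp)
  have b2: "tt nu 14 \<le> 30636/100000*(14+1/2+2*(30636/100000)^2)/((14+1)*(14+1/2)^2+(30634/100000)^2*(3*14+1))"
    by (rule tt_bounds(2); use assms in simp)
  have q1: "(0.00142486::real) \<le> 30634/100000*(14+1/2+2*(30634/100000)^2)/((14+1)*(14+1/2)^2+(30636/100000)^2*(3*14+1))"
    by (simp add: divide_simps power_divide)
  have q2: "30636/100000*(14+1/2+2*(30636/100000)^2)/((14+1)*(14+1/2)^2+(30634/100000)^2*(3*14+1)) \<le> (0.00142497::real)"
    by (simp add: divide_simps power_divide)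
  have t0: "0 \<le> tt nu 14" using assms unfolding tt_def by (intro divide_nonneg_pos) (simp_all add: add_pos_nonneg)
  have "0.00142486 - 0.00142486^3/3 \<le> arctan (tt nu 14)" apply (rule arctan_lo) apply simp using b1 q1 by linarith
  moreover have "arctan (tt nu 14) \<le> 0.00142497 - 0.00142497^3/3 + 0.00142497^5/5" apply (rule arctan_hi) using b2 q2 t0 by linarith+
  moreover have "(0.00142485::real) \<le> 0.00142486 - 0.00142486^3/3" by (simp add: power_divide)
  moreover have "0.00142497 - 0.00142497^3/3 + 0.00142497^5/5 \<le> (0.00142497::real)" by (simp add: power_divide)
  ultimately show ?thesis by linarith
qed

lemma at15: assumes "30634/100000 \<le> nu" "nu \<le> 30636/100000"
  shows "0.00124878 \<le> arctan (tt nu 15) \<and> arctan (tt nu 15) \<le> 0.00124889"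
proof -
  have b1: "30634/100000*(15+1/2+2*(30634/100000)^2)/((15+1)*(15+1/2)^2+(30636/100000)^2*(3*15+1)) \<le> tt nu 15"
    by (rule tt_bounds(1); use assms in simp)
  have b2: "tt nu 15 \<le> 30636/100000*(15+1/2+2*(30636/100000)^2)/((15+1)*(15+1/2)^2+(30634/100000)^2*(3*15+1))"
    by (rule tt_bounds(2); use assms in simp)
  have q1: "(0.00124879::real) \<le> 30634/100000*(15+1/2+2*(30634/100000)^2)/((15+1)*(15+1/2)^2+(30636/100000)^2*(3*15+1))"
    by (simp add: divide_simps power_divide)
  have q2: "30636/100000*(15+1/2+2*(30636/100000)^2)/((15+1)*(15+1/2)^2+(30634/100000)^2*(3*15+1)) \<le> (0.00124889::real)"
    by (simp add: divide_simps power_divide)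
  have t0: "0 \<le> tt nu 15" using assms unfolding tt_def by (intro divide_nonneg_pos) (simp_all add: add_pos_nonneg)
  have "0.00124879 - 0.00124879^3/3 \<le> arctan (tt nu 15)" apply (rule arctan_lo) apply simp using b1 q1 by linarith
  moreover have "arctan (tt nu 15) \<le> 0.00124889 - 0.00124889^3/3 + 0.00124889^5/5" apply (rule arctan_hi) using b2 q2 t0 by linarith+
  moreover have "(0.00124878::real) \<le> 0.00124879 - 0.00124879^3/3" by (simp add: power_divide)
  moreover have "0.00124889 - 0.00124889^3/3 + 0.00124889^5/5 \<le> (0.00124889::real)" by (simp add: power_divide)
  ultimately show ?thesis by linarith
qed



lemma tt_up:
  fixes nu k :: real assumes "0 < nu" "nu^2 \<le> 1/10" "0 \<le> k"
  shows "tt nu k \<le> nu/((k+3/20)*(k+23/20))"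
proof -
  have D: "0 < (k+1)*(k+1/2)^2+nu^2*(3*k+1)" using assms by (simp add: add_pos_nonneg)
  have P: "0 < (k+3/20)*(k+23/20)" using assms by simp
  have N: "0 < k+1/2+2*nu^2" using assms by (simp add: add_pos_nonneg)
  have eq: "((k+1)*(k+1/2)^2+nu^2*(3*k+1)) - (k+1/2+2*nu^2)*((k+3/20)*(k+23/20))
      = (1/5 - 2*nu^2)*k^2 + (4275/10000 + 4/10*nu^2)*k + (16375/100000 + 655/1000*nu^2)"
    by (simp add: field_simps power2_eq_square)
  have "0 \<le> (1/5 - 2*nu^2)*k^2 + (4275/10000 + 4/10*nu^2)*k + (16375/100000 + 655/1000*nu^2)"
    using assms by (intro add_nonneg_nonneg mult_nonneg_nonneg) auto
  hence le: "(k+1/2+2*nu^2)*((k+3/20)*(k+23/20)) \<le> ((k+1)*(k+1/2)^2+nu^2*(3*k+1))"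
    using eq by linarith
  have "tt nu k = nu*(k+1/2+2*nu^2)/((k+1)*(k+1/2)^2+nu^2*(3*k+1))" by (simp add: tt_def)
  also have "\<dots> \<le> nu*(k+1/2+2*nu^2)/((k+1/2+2*nu^2)*((k+3/20)*(k+23/20)))"
  proof (rule divide_left_mono[OF le])
    show "0 \<le> nu*(k+1/2+2*nu^2)" using N assms by simp
    show "0 < ((k+1)*(k+1/2)^2+nu^2*(3*k+1)) * ((k+1/2+2*nu^2)*((k+3/20)*(k+23/20)))"
      using N P D by (simp only: mult_pos_pos)
  qed
  also have "\<dots> = nu/((k+3/20)*(k+23/20))"
    using N by simp
  finally show ?thesis .
qed

lemma tt_low:
  fixes nu k :: real assumes "0 < nu" "9/100 \<le> nu^2" "nu^2 \<le> 1/10" "16 \<le> k"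
  shows "nu/((k+1/5)*(k+6/5)) \<le> tt nu k"
proof -
  have D: "0 < (k+1)*(k+1/2)^2+nu^2*(3*k+1)" using assms by (simp add: add_pos_nonneg)
  have P: "0 < (k+1/5)*(k+6/5)" using assms by simp
  have N: "0 < k+1/2+2*nu^2" using assms by (simp add: add_pos_nonneg)
  have eq: "(k+1/2+2*nu^2)*((k+1/5)*(k+6/5)) - ((k+1)*(k+1/2)^2+nu^2*(3*k+1))
      = (2*nu^2 - 1/10)*k^2 - (31/100 + nu^2/5)*k - (13/100 + 13/25*nu^2)"
    by (simp add: field_simps power2_eq_square)
  have kk: "16*k \<le> k^2" using assms by (simp add: power2_eq_square mult_right_mono)
  have "(8/100)*(16*k) \<le> (2*nu^2 - 1/10)*k^2"
    by (rule mult_mono) (use assms kk in auto)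
  moreover have "(31/100 + nu^2/5)*k \<le> (33/100)*k" using assms by (intro mult_right_mono) auto
  moreover have "13/100 + 13/25*nu^2 \<le> 1/5" using assms by simp
  ultimately have "0 \<le> (2*nu^2 - 1/10)*k^2 - (31/100 + nu^2/5)*k - (13/100 + 13/25*nu^2)"
    using assms by linarith
  hence le: "((k+1)*(k+1/2)^2+nu^2*(3*k+1)) \<le> (k+1/2+2*nu^2)*((k+1/5)*(k+6/5))"
    using eq by linarith
  have "nu/((k+1/5)*(k+6/5)) = nu*(k+1/2+2*nu^2)/((k+1/2+2*nu^2)*((k+1/5)*(k+6/5)))"
    using N by simp
  also have "\<dots> \<le> nu*(k+1/2+2*nu^2)/((k+1)*(k+1/2)^2+nu^2*(3*k+1))"
  proof (rule divide_left_mono[OF le])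
    show "0 \<le> nu*(k+1/2+2*nu^2)" using N assms by simp
    show "0 < ((k+1/2+2*nu^2)*((k+1/5)*(k+6/5))) * ((k+1)*(k+1/2)^2+nu^2*(3*k+1))"
      using N P D by (simp only: mult_pos_pos)
  qed
  also have "\<dots> = tt nu k" by (simp add: tt_def)
  finally show ?thesis .
qed



definition TT :: "real \<Rightarrow> real" where "TT nu = (\<Sum>n. arctan (tt nu (real n + 1)))"

lemma inv_tendsto0: "0 < (c::real) \<Longrightarrow> (\<lambda>n. 1/(real n + c)) \<longlonglongrightarrow> 0"
proof -
  assume c: "0 < c"
  have "filterlim (\<lambda>n. c + real n) at_top sequentially"
    by (rule filterlim_tendsto_add_at_top[OF tendsto_const filterlim_real_sequentially])
  hence "filterlim (\<lambda>n. real n + c) at_top sequentially" by (simp add: add.commute)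
  hence "filterlim (\<lambda>n. real n + c) at_infinity sequentially"
    by (rule filterlim_at_top_imp_at_infinity)
  thus ?thesis by (intro tendsto_divide_0[OF tendsto_const])
qed

lemma tele_sums: "0 < (c::real) \<Longrightarrow> (\<lambda>n. nu * (1/(real n + c) - 1/(real (Suc n) + c))) sums (nu / c)"
proof -
  assume c: "0 < c"
  have "(\<lambda>n. 1/(real n + c) - 1/(real (Suc n) + c)) sums (1/(real 0 + c) - 0)"
    using telescope_sums'[OF inv_tendsto0[OF c]] by simp
  from sums_mult[OF this, of nu] show ?thesis by simp
qed

lemma inv_diff: "0 < (x::real) \<Longrightarrow> 1/x - 1/(x+1) = 1/(x*(x+1))"
  by (simp add: field_simps)

lemma T_bounds:
  assumes nl: "30634/100000 \<le> nu" and nh: "nu \<le> 30636/100000"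
  shows "summable (\<lambda>n. arctan (tt nu (real n + 1)))" "0.243727 \<le> TT nu" "TT nu \<le> 0.24381"
proof -
  define F where "F n = arctan (tt nu (real n + 1))" for n
  have nupos: "0 < nu" using nl by simp
  have nu2: "9/100 \<le> nu^2" "nu^2 \<le> 1/10"
  proof -
    have "(30634/100000)^2 \<le> nu^2" using nl by (intro power_mono) auto
    thus "9/100 \<le> nu^2" by (simp add: power_divide)
    have "nu^2 \<le> (30636/100000)^2" using nh nupos by (intro power_mono) auto
    thus "nu^2 \<le> 1/10" by (simp add: power_divide)
  qed
  have tt0: "0 \<le> tt nu k" if "0 \<le> k" for k
    using that nupos unfolding tt_def by (intro divide_nonneg_pos) (simp_all add: add_pos_nonneg)
  have F0: "0 \<le> F n" for n unfolding F_def using tt0[of "real n + 1"] by simp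
  have Fup: "F (n + m) \<le> nu * (1/(real n + (real m + 23/20)) - 1/(real (Suc n) + (real m + 23/20)))" for n m
  proof -
    have "F (n+m) \<le> tt nu (real (n+m) + 1)" unfolding F_def
      by (rule arctan_le_self) (rule tt0, simp)
    also have "\<dots> \<le> nu/((real (n+m) + 1 + 3/20)*(real (n+m) + 1 + 23/20))"
      by (rule tt_up) (use nupos nu2 in auto)
    also have "\<dots> = nu * (1/(real n + (real m + 23/20)) - 1/(real (Suc n) + (real m + 23/20)))"
      using inv_diff[of "real n + (real m + 23/20)"] by (simp add: algebra_simps)
    finally show ?thesis .
  qed
  have sumF: "summable F"
  proof (rule summable_comparison_test')
    show "summable (\<lambda>n. nu * (1/(real n + (real 0 + 23/20)) - 1/(real (Suc n) + (real 0 + 23/20))))"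
      by (rule sums_summable[OF tele_sums]) simp
    show "norm (F n) \<le> nu * (1/(real n + (real 0 + 23/20)) - 1/(real (Suc n) + (real 0 + 23/20)))" for n
      using Fup[of n 0] F0[of n] by simp
  qed
  thus "summable (\<lambda>n. arctan (tt nu (real n + 1)))" unfolding F_def .
  have split: "TT nu = (\<Sum>n. F (n + 15)) + (\<Sum>i<15. F i)"
    unfolding TT_def F_def[symmetric] by (rule suminf_split_initial_segment[OF sumF])
  have sum15: "summable (\<lambda>n. F (n + 15))" using sumF by (rule summable_ignore_initial_segment)
  have tailup: "(\<Sum>n. F (n + 15)) \<le> nu / (15 + 23/20)"
  proof -
    have s: "(\<lambda>n. nu * (1/(real n + (real 15 + 23/20)) - 1/(real (Suc n) + (real 15 + 23/20)))) sums (nu / (real 15 + 23/20))"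
      by (rule tele_sums) simp
    have "(\<Sum>n. F (n + 15)) \<le> nu / (real 15 + 23/20)"
      by (rule sums_le[OF _ summable_sums[OF sum15] s]) (use Fup[of _ 15] in simp)
    thus ?thesis by simp
  qed
  have Flow: "(1 - 1/30000) * (nu * (1/(real n + (16 + 1/5)) - 1/(real (Suc n) + (16 + 1/5)))) \<le> F (n + 15)" for n
  proof -
    define k where "k = real n + 16"
    have k16: "16 \<le> k" unfolding k_def by simp
    have t: "tt nu k \<le> 1/100"
    proof -
      have "tt nu k \<le> nu/((k+3/20)*(k+23/20))" by (rule tt_up) (use nupos nu2 k16 in auto)
      also have "\<dots> \<le> 1/((k+3/20)*(k+23/20))" using nh k16 by (intro divide_right_mono) auto
      also have "\<dots> \<le> 1/(16*16)" using k16 by (intro divide_left_mono mult_mono) auto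
      finally show ?thesis by simp
    qed
    have t0: "0 \<le> tt nu k" using tt0 k16 by simp
    have "nu * (1/(real n + (16 + 1/5)) - 1/(real (Suc n) + (16 + 1/5))) = nu/((k+1/5)*(k+6/5))"
      using inv_diff[of "real n + (16 + 1/5)"] unfolding k_def by (simp add: algebra_simps)
    also have "\<dots> \<le> tt nu k" by (rule tt_low) (use nupos nu2 k16 in auto)
    finally have a: "nu * (1/(real n + (16 + 1/5)) - 1/(real (Suc n) + (16 + 1/5))) \<le> tt nu k" .
    have "tt nu k ^ 2 \<le> (1/100)^2" using t t0 by (intro power_mono) auto
    hence "tt nu k ^ 2 * tt nu k \<le> (1/100)^2 * tt nu k" using t0 by (rule mult_right_mono)
    hence "tt nu k ^ 3 \<le> (1/10000) * tt nu k"
      by (simp add: power3_eq_cube power2_eq_square)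
    hence "(1 - 1/30000) * tt nu k \<le> tt nu k - tt nu k^3/3" by simp
    also have "\<dots> \<le> arctan (tt nu k)" by (rule arctan_lower3[OF t0])
    also have "\<dots> = F (n + 15)" unfolding F_def k_def by (simp add: add.commute)
    moreover have "(1 - 1/30000) * (nu * (1/(real n + (16 + 1/5)) - 1/(real (Suc n) + (16 + 1/5)))) \<le> (1 - 1/30000) * tt nu k"
      by (rule mult_left_mono[OF a]) simp
    ultimately show ?thesis by linarith
  qed
  have taillow: "(1 - 1/30000) * (nu / (16 + 1/5)) \<le> (\<Sum>n. F (n + 15))"
  proof -
    have s: "(\<lambda>n. (1 - 1/30000) * (nu * (1/(real n + (16 + 1/5)) - 1/(real (Suc n) + (16 + 1/5))))) sums ((1 - 1/30000) * (nu / (16 + 1/5)))"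
      by (rule sums_mult) (rule tele_sums, simp)
    show ?thesis by (rule sums_le[OF Flow s summable_sums[OF sum15]])
  qed
  have fin: "0.22481862 \<le> (\<Sum>i<15. F i) \<and> (\<Sum>i<15. F i) \<le> 0.22483986"
    using at1[OF nl nh] at2[OF nl nh] at3[OF nl nh] at4[OF nl nh] at5[OF nl nh]
      at6[OF nl nh] at7[OF nl nh] at8[OF nl nh] at9[OF nl nh] at10[OF nl nh]
      at11[OF nl nh] at12[OF nl nh] at13[OF nl nh] at14[OF nl nh] at15[OF nl nh]
    by (simp add: F_def lessThan_nat_numeral)
  have "(1 - 1/30000) * ((30634/100000) / (16 + 1/5)) \<le> (1 - 1/30000) * (nu / (16 + 1/5))"
    using nl by (intro mult_left_mono divide_right_mono) auto
  thus "0.243727 \<le> TT nu" using split fin taillow by simp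
  have "nu / (15 + 23/20) \<le> (30636/100000) / (15 + 23/20)" using nh by (intro divide_right_mono) auto
  thus "TT nu \<le> 0.24381" using split fin tailup by simp
qed



lemma sqrt5_bounds: "2.23606 \<le> sqrt (5::real)" "sqrt (5::real) \<le> 2.2361"
proof -
  have "sqrt ((2.23606::real)^2) \<le> sqrt 5" by (subst real_sqrt_le_iff) (simp add: power2_eq_square)
  thus "2.23606 \<le> sqrt (5::real)" by simp
  have "sqrt 5 \<le> sqrt ((2.2361::real)^2)" by (subst real_sqrt_le_iff) (simp add: power2_eq_square)
  thus "sqrt (5::real) \<le> 2.2361" by simp
qed

lemma nu_bounds:
  assumes h: "exp (pi*nu) = (3 + sqrt 5)/2"
  shows "30634/100000 \<le> nu" "nu \<le> 30636/100000"
proof -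
  have "exp (9624/10000::real) \<le> (\<Sum>m<12. (9624/10000::real)^m / fact m) / (1 - (9624/10000::real)^12 / fact 12)"
    by (rule exp_upper_taylor) (simp_all add: fact_numeral power_divide)
  also have "\<dots> \<le> 2.61803" by (simp add: fact_numeral lessThan_nat_numeral power_divide)
  also have "\<dots> \<le> exp (pi*nu)" using h sqrt5_bounds by simp
  finally have "9624/10000 \<le> pi*nu" by simp
  hence "9624/10000 / pi \<le> nu" by (simp add: divide_simps algebra_simps)
  moreover have "30634/100000 \<le> 9624/10000 / pi"
    using pi_approx by (simp add: divide_simps)
  ultimately show "30634/100000 \<le> nu" by linarith
  have "exp (pi*nu) \<le> 2.61805" using h sqrt5_bounds by simp
  also have "(2.61805::real) \<le> (\<Sum>m<12. (96245/100000::real)^m / fact m)"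
    by (simp add: fact_numeral lessThan_nat_numeral power_divide)
  also have "\<dots> \<le> exp (96245/100000)" by (rule exp_lower_taylor) simp
  finally have "pi*nu \<le> 96245/100000" by simp
  hence "nu \<le> 96245/100000 / pi" by (simp add: divide_simps algebra_simps)
  moreover have "96245/100000 / pi \<le> 30636/100000"
    using pi_approx by (simp add: divide_simps)
  ultimately show "nu \<le> 30636/100000" by linarith
qed

lemma final_num:
  assumes nl: "30634/100000 \<le> nu" and nh: "nu \<le> 30636/100000"
    and tl: "0.243727 \<le> T" and th: "T \<le> 0.24381"
  shows "0.0291 \<le> exp (-((pi/2 - 2*T)/nu))" "exp (-((pi/2 - 2*T)/nu)) < 0.0292"
proof -
  have nupos: "0 < nu" using nl by simp
  have num1: "pi/2 - 2*T \<le> 3.1415926535899/2 - 2*0.243727" using pi_approx tl by simp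
  have num2: "3.141592653588/2 - 2*0.24381 \<le> pi/2 - 2*T" using pi_approx th by simp
  have "(pi/2 - 2*T)/nu \<le> (3.1415926535899/2 - 2*0.243727)/nu"
    using num1 nupos by (intro divide_right_mono) auto
  also have "\<dots> \<le> (3.1415926535899/2 - 2*0.243727)/(30634/100000)"
    using nl nupos by (intro divide_left_mono) auto
  also have "\<dots> \<le> 3.5365" by simp
  finally have X1: "(pi/2 - 2*T)/nu \<le> 3.5365" .
  have "(3.5356::real) \<le> (3.141592653588/2 - 2*0.24381)/(30636/100000)" by simp
  also have "\<dots> \<le> (3.141592653588/2 - 2*0.24381)/nu"
    using nh nupos by (intro divide_left_mono) auto
  also have "\<dots> \<le> (pi/2 - 2*T)/nu"
    using num2 nupos by (intro divide_right_mono) auto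
  finally have X2: "3.5356 \<le> (pi/2 - 2*T)/nu" .
  have "exp ((pi/2 - 2*T)/nu) \<le> exp (35365/10000)" using X1 by simp
  also have "exp (35365/10000::real) \<le> (\<Sum>m<18. (35365/10000::real)^m / fact m) / (1 - (35365/10000::real)^18 / fact 18)"
    by (rule exp_upper_taylor) (simp_all add: fact_numeral power_divide)
  also have "\<dots> \<le> 34.35" by (simp add: fact_numeral lessThan_nat_numeral power_divide)
  finally have E1: "exp ((pi/2 - 2*T)/nu) \<le> 34.35" by simp
  have "(34.3::real) \<le> (\<Sum>m<16. (35356/10000::real)^m / fact m)"
    by (simp add: fact_numeral lessThan_nat_numeral power_divide)
  also have "\<dots> \<le> exp (35356/10000)" by (rule exp_lower_taylor) simp
  also have "\<dots> \<le> exp ((pi/2 - 2*T)/nu)" using X2 by simp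
  finally have E2: "34.3 \<le> exp ((pi/2 - 2*T)/nu)" .
  have eq: "exp (-((pi/2 - 2*T)/nu)) = 1 / exp ((pi/2 - 2*T)/nu)" by (simp add: exp_minus inverse_eq_divide)
  show "0.0291 \<le> exp (-((pi/2 - 2*T)/nu))" unfolding eq using E1
    by (simp add: divide_simps)
  show "exp (-((pi/2 - 2*T)/nu)) < 0.0292" unfolding eq using E2
    by (simp add: divide_simps)
qed



lemma cosh_ofr: "cosh (complex_of_real x) = complex_of_real (cosh x)"
  using exp_of_real[of "-x"] by (simp add: cosh_def scaleR_conv_of_real exp_of_real)
lemma sinh_ofr: "sinh (complex_of_real x) = complex_of_real (sinh x)"
  using exp_of_real[of "-x"] by (simp add: sinh_def scaleR_conv_of_real exp_of_real)

lemma hyper_facts: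
  fixes nu :: real
  assumes nu: "nu > 0" and p0x: "- 7 = - 2 * cosh (2 * pi * nu)"
  shows "exp (pi*nu) = (3 + sqrt 5)/2" "cosh (pi*nu) = 3/2" "sinh (pi*nu) = sqrt 5/2"
        "exp (2*pi*nu) = (7 + 3 * sqrt 5)/2" "sinh (2*pi*nu) = 3 * sqrt 5/2"
proof -
  define h where "h = exp (pi*nu)"
  have h1: "1 < h" unfolding h_def using nu by simp
  have e2: "exp (2*pi*nu) = h^2" unfolding h_def by (simp add: power2_eq_square exp_add[symmetric])
  have em2: "exp (-(2*pi*nu)) = 1/h^2" using e2 by (simp add: exp_minus inverse_eq_divide)
  have "cosh (2*pi*nu) = (h^2 + 1/h^2)/2" unfolding cosh_def using e2 em2 by simp
  hence "h^2 + 1/h^2 = 7" using p0x by simp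
  hence q4: "h^4 - 7*h^2 + 1 = 0" using h1 by (simp add: field_simps power2_eq_square numeral_eq_Suc)
  have "(h^2 - 3*h + 1) * (h^2 + 3*h + 1) = h^4 - 7*h^2 + 1" by (simp add: algebra_simps power2_eq_square numeral_eq_Suc)
  moreover have "h^2 + 3*h + 1 > 0" using h1 by (simp add: add_pos_nonneg)
  ultimately have q2: "h^2 - 3*h + 1 = 0" using q4 by simp
  have s5: "sqrt 5 * sqrt 5 = (5::real)" by simp
  have "(h - (3 + sqrt 5)/2) * (h - (3 - sqrt 5)/2) = h^2 - 3*h + 1"
    by (simp add: algebra_simps power2_eq_square s5 field_simps)
  moreover have "h - (3 - sqrt 5)/2 \<noteq> 0"
  proof -
    have "sqrt 5 > (1::real)" by simp
    hence "h - (3 - sqrt 5)/2 > 0" using h1 by argo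
    thus ?thesis by simp
  qed
  ultimately have hval: "h = (3 + sqrt 5)/2" using q2 by simp
  thus "exp (pi*nu) = (3 + sqrt 5)/2" unfolding h_def .
  have ih: "exp (-(pi*nu)) = 1/h" unfolding h_def by (simp add: exp_minus inverse_eq_divide)
  have inv: "1/h = (3 - sqrt 5)/2"
  proof -
    have "((3 + sqrt 5)/2) * ((3 - sqrt 5)/2) = (1::real)" by (simp add: algebra_simps)
    hence "h * ((3 - sqrt 5)/2) = 1" unfolding hval .
    thus ?thesis using h1 by (simp add: field_simps)
  qed
  show c: "cosh (pi*nu) = 3/2" unfolding cosh_def using ih inv hval h_def by simp
  show s: "sinh (pi*nu) = sqrt 5/2" unfolding sinh_def using ih inv hval h_def by simp
  show "exp (2*pi*nu) = (7 + 3 * sqrt 5)/2" using e2 hval by (simp add: power2_eq_square algebra_simps s5 field_simps)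
  have "sinh (2*pi*nu) = 2 * sinh (pi*nu) * cosh (pi*nu)"
    using sinh_double[of "pi*nu"] by (simp add: mult.assoc)
  thus "sinh (2*pi*nu) = 3 * sqrt 5/2" using c s by simp
qed

lemma notnpi: "Im (w::complex) \<noteq> 0 \<Longrightarrow> w \<notin> \<int>\<^sub>\<le>\<^sub>0"
  using nonpos_Ints_subset_nonpos_Reals complex_nonpos_Reals_iff by blast

lemma sin_half_minus: "sin (complex_of_real (pi/2) - w) = cos w"
  by (simp add: sin_diff sin_of_real cos_of_real)

lemma sin_i: "sin (\<i> * (X::complex)) = \<i> * sinh X"
proof -
  have "\<i> * sinh X = \<i> * (- \<i> * sin (\<i> * X))" by (simp only: sinh_conv_sin[of X])
  thus ?thesis by simp
qed

lemma G1_norm: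
  fixes nu :: real
  shows "(norm (Gamma (1/2 - \<i> * of_real nu)))^2 = pi / cosh (pi*nu)"
proof -
  define z where "z = 1/2 - \<i> * complex_of_real nu"
  have cz: "1 - z = cnj z" unfolding z_def by (simp add: complex_eq_iff)
  have "Gamma z * Gamma (1 - z) = of_real pi / sin (of_real pi * z)" by (rule Gamma_reflection_complex)
  also have "of_real pi * z = complex_of_real (pi/2) - \<i> * of_real (pi*nu)"
    unfolding z_def by (simp add: algebra_simps)
  also have "sin \<dots> = cos (\<i> * of_real (pi*nu))" by (rule sin_half_minus)
  also have "\<dots> = cosh (of_real (pi*nu))" by (rule cosh_conv_cos[symmetric])
  also have "\<dots> = of_real (cosh (pi*nu))" by (rule cosh_ofr)
  finally have "Gamma z * cnj (Gamma z) = of_real (pi / cosh (pi*nu))" using cz cnj_Gamma by simp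
  hence "complex_of_real ((norm (Gamma z))^2) = of_real (pi / cosh (pi*nu))"
    by (subst complex_norm_square) simp
  thus ?thesis unfolding z_def of_real_eq_iff .
qed

lemma G3_norm:
  fixes nu :: real assumes nu: "nu > 0"
  shows "(norm (Gamma (1 - 2 * \<i> * of_real nu)))^2 = 2 * pi * nu / sinh (2*pi*nu)"
proof -
  define w where "w = 2 * \<i> * complex_of_real nu"
  have wn: "w \<notin> \<int>\<^sub>\<le>\<^sub>0" unfolding w_def using nu by (intro notnpi) simp
  have c: "cnj (1 - w) = w + 1" unfolding w_def by (simp add: complex_eq_iff)
  have "Gamma w * Gamma (1 - w) = of_real pi / sin (of_real pi * w)" by (rule Gamma_reflection_complex)
  also have "of_real pi * w = \<i> * of_real (2*pi*nu)" unfolding w_def by (simp add: algebra_simps)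
  also have "sin \<dots> = \<i> * sinh (of_real (2*pi*nu))" by (rule sin_i)
  also have "sinh (complex_of_real (2*pi*nu)) = of_real (sinh (2*pi*nu))" by (rule sinh_ofr)
  finally have r: "Gamma w * Gamma (1 - w) = of_real pi / (\<i> * of_real (sinh (2*pi*nu)))" .
  have "Gamma (1 - w) * cnj (Gamma (1 - w)) = Gamma (1 - w) * Gamma (w + 1)"
    by (simp only: cnj_Gamma c)
  also have "\<dots> = w * (Gamma w * Gamma (1 - w))" using Gamma_plus1[OF wn] by (simp add: algebra_simps)
  also have "\<dots> = of_real (2 * pi * nu / sinh (2*pi*nu))"
    unfolding r unfolding w_def by (simp add: field_simps)
  finally have "complex_of_real ((norm (Gamma (1 - w)))^2) = of_real (2 * pi * nu / sinh (2*pi*nu))"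
    by (subst complex_norm_square) simp
  thus ?thesis unfolding w_def of_real_eq_iff .
qed



lemma alg_key:
  fixes G1 G3 E z :: complex and nu sp S :: real
  assumes "G1 \<noteq> 0" "G3 \<noteq> 0" "E \<noteq> 0" "nu \<noteq> 0" "sp \<noteq> 0" "S \<noteq> 0"
    "z \<noteq> 0" "z - 1 \<noteq> 0" "z + 1 \<noteq> 0"
  shows "- (4 * E^4 * ((z+1)*z*G1) ^ 2 * (G1/(z-1)) ^ 2) /
          ((2 * \<i> * (z + 1)) ^ 2 * of_real nu ^ 2 * of_real S ^ 2 * ((E * of_real sp * G3 / G1) / (- \<i> * of_real nu)) ^ 4)
       = of_real (nu^2 / (sp^4 * S^2)) * (z/(z-1))^2 * (G1^2/G3)^4"
proof -
  have q: "(- \<i> * complex_of_real nu)^4 = of_real nu ^ 4" by (simp add: power_mult_distrib)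
  have r: "(2 * \<i> * (z + 1))^2 = - 4 * (z+1)^2" by (simp add: power_mult_distrib)
  show ?thesis unfolding r using assms q
    apply (simp add: field_simps power_mult_distrib power_divide) by (simp add: algebra_simps eval_nat_numeral)
qed

lemma A_formula:
  fixes nu p01 px1 :: real assumes nu: "0 < nu"
  shows "d_argument (-1) p01 px1 nu =
    of_real (nu^2 / (pi^2 * (sinh (2*pi*nu))^2)) * ((1/2 - \<i> * of_real nu)/((1/2 - \<i> * of_real nu)-1))^2
     * (Gamma (1/2 - \<i> * of_real nu) ^2 / Gamma (2*(1/2 - \<i> * of_real nu)))^4
     * of_real (1/2 * (exp (2 * pi * nu) * px1 - p01) * sinh (2 * pi * nu)
                + (cos (2 * pi * (-1)) + 1) * (exp (2 * pi * nu) + 1))"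
proof -
  define z where "z = 1/2 - \<i> * complex_of_real nu"
  define E where "E = exp ((1 - 2*z) * of_real (ln 2))"
  define G1 where "G1 = Gamma z"
  define G3 where "G3 = Gamma (2*z)"
  have zI: "Im z \<noteq> 0" "Im (z+1) \<noteq> 0" "Im (z-1) \<noteq> 0" "Im (z - 1/2) \<noteq> 0" "Im (z + 1/2) \<noteq> 0" "Im (2*z) \<noteq> 0"
    unfolding z_def using nu by simp_all
  have zn: "z \<notin> \<int>\<^sub>\<le>\<^sub>0" "z+1 \<notin> \<int>\<^sub>\<le>\<^sub>0" "z-1 \<notin> \<int>\<^sub>\<le>\<^sub>0" "z - 1/2 \<notin> \<int>\<^sub>\<le>\<^sub>0" "z + 1/2 \<notin> \<int>\<^sub>\<le>\<^sub>0" "2*z \<notin> \<int>\<^sub>\<le>\<^sub>0"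
    using zI by (simp_all add: notnpi)
  have G1n: "G1 \<noteq> 0" unfolding G1_def using zn by (simp add: Gamma_eq_zero_iff)
  have G3n: "G3 \<noteq> 0" unfolding G3_def using zn by (simp add: Gamma_eq_zero_iff)
  have En: "E \<noteq> 0" unfolding E_def by simp
  have z0: "z \<noteq> 0" "z - 1 \<noteq> 0" "z + 1 \<noteq> 0" unfolding z_def by (simp_all add: complex_eq_iff)
  have a1: "3/2 - complex_of_real (-1) - \<i> * of_real nu = (z+1)+1" unfolding z_def by simp
  have a2: "complex_of_real (-1) + 1/2 - \<i> * of_real nu = z - 1" unfolding z_def by simp
  have a3: "- \<i> * complex_of_real nu = z - 1/2" unfolding z_def by simp
  have a4: "2 * complex_of_real nu + \<i> * (1 - 2 * complex_of_real (-1)) = 2*\<i>*(z+1)"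
    unfolding z_def by (simp add: algebra_simps)
  have l16: "ln (16::real) = 4 * ln 2" using ln_realpow[of 2 4] by simp
  have a5: "exp (2 * \<i> * complex_of_real nu * complex_of_real (ln 16)) = E^4"
    unfolding E_def exp_of_nat_mult[symmetric] unfolding z_def l16 by (simp add: algebra_simps)
  have g1: "Gamma ((z+1)+1) = (z+1)*z*G1"
    unfolding G1_def using Gamma_plus1[OF zn(2)] Gamma_plus1[OF zn(1)] by simp
  have g2: "Gamma (z-1) = G1/(z-1)"
    unfolding G1_def using Gamma_plus1[OF zn(3)] z0 by (simp add: field_simps)
  have dup: "G1 * Gamma (z + 1/2) = E * of_real (sqrt pi) * G3"
    unfolding G1_def G3_def E_def by (rule Gamma_legendre_duplication[OF zn(1) zn(5)])
  have g3: "Gamma (z - 1/2) = (E * of_real (sqrt pi) * G3 / G1) / (- \<i> * complex_of_real nu)"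
  proof -
    have "Gamma ((z - 1/2) + 1) = (z - 1/2) * Gamma (z - 1/2)" by (rule Gamma_plus1[OF zn(4)])
    hence "Gamma (z + 1/2) = (z - 1/2) * Gamma (z - 1/2)" by (simp add: algebra_simps)
    moreover have "Gamma (z + 1/2) = E * of_real (sqrt pi) * G3 / G1" using dup G1n by (simp add: field_simps)
    ultimately have e: "Gamma (z - 1/2) * (z - 1/2) = E * of_real (sqrt pi) * G3 / G1" by (simp add: mult.commute)
    have nz: "z - 1/2 \<noteq> 0" unfolding z_def using nu by (simp add: complex_eq_iff)
    have "Gamma (z - 1/2) = (E * of_real (sqrt pi) * G3 / G1) / (z - 1/2)"
      using nz e by (subst eq_divide_eq) simp
    thus ?thesis unfolding a3 .
  qed
  have sp4: "(sqrt pi)^4 = pi^2"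
  proof -
    have s2: "(sqrt pi)^2 = pi" by simp
    have "(sqrt pi)^4 = (sqrt pi)^(2*2)" by simp
    also have "\<dots> = ((sqrt pi)^2)^2" by (rule power_mult)
    finally show ?thesis by (simp only: s2)
  qed
  have "d_argument (-1) p01 px1 nu = 
    - (4 * E^4 * ((z+1)*z*G1) ^ 2 * (G1/(z-1)) ^ 2) /
          ((2 * \<i> * (z + 1)) ^ 2 * of_real nu ^ 2 * of_real (sinh (2*pi*nu)) ^ 2 * ((E * of_real (sqrt pi) * G3 / G1) / (- \<i> * of_real nu)) ^ 4)
     * of_real (1/2 * (exp (2 * pi * nu) * px1 - p01) * sinh (2 * pi * nu)
                + (cos (2 * pi * (-1)) + 1) * (exp (2 * pi * nu) + 1))"
    unfolding d_argument_def a1 a2 a3 a4 a5 g1 g2 g3 by simp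
  also have "- (4 * E^4 * ((z+1)*z*G1) ^ 2 * (G1/(z-1)) ^ 2) /
          ((2 * \<i> * (z + 1)) ^ 2 * of_real nu ^ 2 * of_real (sinh (2*pi*nu)) ^ 2 * ((E * of_real (sqrt pi) * G3 / G1) / (- \<i> * of_real nu)) ^ 4)
       = of_real (nu^2 / ((sqrt pi)^4 * (sinh (2*pi*nu))^2)) * (z/(z-1))^2 * (G1^2/G3)^4"
    by (rule alg_key) (use G1n G3n En nu z0 in auto)
  finally show ?thesis unfolding sp4 z_def G1_def G3_def .
qed



lemma sgn_polar:
  fixes u :: complex assumes "0 < Re u"
  shows "sgn u = exp (\<i> * of_real (arctan (Im u / Re u)))"
proof -
  define r where "r = Im u / Re u"
  have imu: "Im u = r * Re u" unfolding r_def using assms by simp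
  have q: "0 < 1 + r^2" by (simp add: add_pos_nonneg)
  have n: "cmod u = Re u * sqrt (1 + r^2)"
  proof -
    have "cmod u = sqrt ((Re u)^2 + (Im u)^2)" by (simp add: cmod_def)
    also have "(Re u)^2 + (Im u)^2 = (Re u)^2 * (1 + r^2)" unfolding imu by (simp add: algebra_simps power2_eq_square)
    also have "sqrt \<dots> = Re u * sqrt (1 + r^2)" using assms by (simp add: real_sqrt_mult)
    finally show ?thesis .
  qed
  have np: "0 < cmod u" using n assms q by simp
  have "u = complex_of_real (cmod u) * exp (\<i> * of_real (arctan r))"
  proof (rule complex_eqI)
    show "Re u = Re (complex_of_real (cmod u) * exp (\<i> * complex_of_real (arctan r)))"
      using q by (simp add: Re_exp Im_exp cos_arctan n)
    show "Im u = Im (complex_of_real (cmod u) * exp (\<i> * complex_of_real (arctan r)))"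
      using q by (simp add: Re_exp Im_exp sin_arctan n imu)
  qed
  hence "sgn u = sgn (complex_of_real (cmod u) * exp (\<i> * of_real (arctan r)))" by simp
  also have "\<dots> = exp (\<i> * of_real (arctan r))"
    using np by (simp add: sgn_mult sgn_of_real del: sgn_eq) (simp add: sgn_eq norm_exp_i_times)
  finally show ?thesis unfolding r_def .
qed

lemma sgn_pos_mult: "0 < (c::real) \<Longrightarrow> sgn (complex_of_real c * u) = sgn u"
  by (simp add: sgn_mult sgn_of_real)

lemma B_phase:
  fixes nu :: real assumes nu: "0 < nu" and sumT: "summable (\<lambda>n. arctan (tt nu (real n + 1)))"
  shows "sgn (Gamma (1/2 - \<i> * complex_of_real nu) ^ 2 / Gamma (2*(1/2 - \<i> * complex_of_real nu)))
         = exp (\<i> * of_real (arctan (2*nu) + (\<Sum>n. arctan (tt nu (real n + 1)))))"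
proof -
  define z where "z = 1/2 - \<i> * complex_of_real nu"
  define c where "c n = (fact n :: complex) * pochhammer (2*z) (n+1) / (pochhammer z (n+1))^2" for n
  define Tn where "Tn n = (\<Sum>i<n. arctan (tt nu (real i + 1)))" for n
  define B where "B = Gamma z ^ 2 / Gamma (2*z)"
  have Imz: "Im z = - nu" "Im (2*z) = - 2*nu" unfolding z_def by simp_all
  have pn: "pochhammer z m \<noteq> 0" "pochhammer (2*z) m \<noteq> 0" for m
  proof -
    show "pochhammer z m \<noteq> 0"
    proof
      assume "pochhammer z m = 0"
      then obtain k where "z = - of_nat k" by (auto simp: pochhammer_eq_0_iff)
      hence "Im z = 0" by simp
      thus False using Imz nu by simp
    qed
    show "pochhammer (2*z) m \<noteq> 0"
    proof
      assume "pochhammer (2*z) m = 0"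
      then obtain k where "2*z = - of_nat k" by (auto simp: pochhammer_eq_0_iff)
      hence "Im (2*z) = 0" by simp
      thus False using Imz nu by simp
    qed
  qed
  have G3n: "Gamma (2*z) \<noteq> 0" using Imz nu by (simp add: Gamma_eq_zero_iff notnpi)
  have G1n: "Gamma z \<noteq> 0" using Imz nu by (simp add: Gamma_eq_zero_iff notnpi)
  have Bn: "B \<noteq> 0" unfolding B_def using G1n G3n by simp
  have beq: "Gamma_series z n ^ 2 / Gamma_series (2*z) n = c n" for n
  proof -
    define L where "L = complex_of_real (ln (real n))"
    have e2: "exp (z * L)^2 = exp (2 * z * L)" by (simp add: power2_eq_square exp_add[symmetric] algebra_simps)
    show ?thesis unfolding Gamma_series_def c_def L_def[symmetric] e2[symmetric]
      using pn[of "n+1"] by (simp add: field_simps power2_eq_square)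
  qed
  have lim: "c \<longlonglongrightarrow> B"
  proof -
    have "(\<lambda>n. Gamma_series z n ^ 2 / Gamma_series (2*z) n) \<longlonglongrightarrow> B"
      unfolding B_def by (intro tendsto_intros G3n)
    thus ?thesis using beq by simp
  qed
  have step: "sgn (c n) = exp (\<i> * of_real (arctan (2*nu) + Tn n))" for n
  proof (induction n)
    case 0
    have zn: "z \<noteq> 0" unfolding z_def by (simp add: complex_eq_iff)
    have c0: "c 0 = complex_of_real (2 / (cmod z)^2) * cnj z"
    proof -
      have "c 0 = 2 / z" unfolding c_def using zn by (simp add: power2_eq_square)
      also have "\<dots> = complex_of_real (2 / (cmod z)^2) * cnj z"
        using zn complex_norm_square[of z] by (simp add: field_simps)
      finally show ?thesis .
    qed
    have "sgn (c 0) = sgn (cnj z)" unfolding c0 using zn by (intro sgn_pos_mult) simp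
    also have "\<dots> = exp (\<i> * of_real (arctan (Im (cnj z) / Re (cnj z))))" by (rule sgn_polar) (simp add: z_def)
    also have "Im (cnj z) / Re (cnj z) = 2*nu" by (simp add: z_def)
    finally show ?case by (simp add: Tn_def)
  next
    case (Suc n)
    define k where "k = real n + 1"
    have k1: "1 \<le> k" unfolding k_def by simp
    define w where "w = z + of_real k"
    define u where "u = (2*z + of_real k) * cnj w ^ 2"
    have wn: "w \<noteq> 0" unfolding w_def z_def using k1 by (simp add: complex_eq_iff)
    have ofk: "of_nat (Suc n) = complex_of_real k" unfolding k_def by simp
    have cs: "c (Suc n) = c n * (complex_of_real k * (2*z + of_real k) / w^2)"
    proof -
      have "c (Suc n) = (fact (Suc n) :: complex) * (pochhammer (2*z) (n+1) * (2*z + of_nat (n+1)))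
              / (pochhammer z (n+1) * (z + of_nat (n+1)))^2"
        unfolding c_def by (simp add: pochhammer_Suc)
      also have "\<dots> = c n * (complex_of_real k * (2*z + of_real k) / w^2)"
        unfolding c_def w_def using pn[of "n+1"] ofk
        by (simp add: field_simps power2_eq_square k_def)
      finally show ?thesis .
    qed
    have fk: "complex_of_real k * (2*z + of_real k) / w^2 = complex_of_real (k / (cmod w)^4) * u"
    proof -
      have "w^2 * cnj w ^2 = complex_of_real ((cmod w)^4)"
      proof -
        have "w^2 * cnj w ^2 = (w * cnj w)^2" by (simp add: power_mult_distrib)
        also have "\<dots> = (complex_of_real ((cmod w)^2))^2" by (simp only: complex_norm_square)
        also have "\<dots> = complex_of_real ((cmod w)^4)" by (simp add: power2_eq_square power4_eq_xxxx mult.assoc)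
        finally show ?thesis .
      qed
      thus ?thesis unfolding u_def using wn by (simp add: field_simps)
    qed
    have reu: "Re u = (k+1)*(k+1/2)^2 + nu^2*(3*k+1)" unfolding u_def w_def z_def
      by (simp add: power2_eq_square algebra_simps)
    have imu: "Im u = nu*(k+1/2+2*nu^2)" unfolding u_def w_def z_def
      by (simp add: power2_eq_square algebra_simps)
    have reup: "0 < Re u" unfolding reu using k1 by (simp add: add_pos_nonneg)
    have "sgn (complex_of_real k * (2*z + of_real k) / w^2) = sgn u"
      unfolding fk using k1 wn by (intro sgn_pos_mult) simp
    also have "\<dots> = exp (\<i> * of_real (arctan (tt nu k)))"
      unfolding sgn_polar[OF reup] reu imu tt_def ..
    finally have sf: "sgn (complex_of_real k * (2*z + of_real k) / w^2) = exp (\<i> * of_real (arctan (tt nu k)))" .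
    have "sgn (c (Suc n)) = sgn (c n) * exp (\<i> * of_real (arctan (tt nu k)))"
      unfolding cs sgn_mult sf ..
    also have "\<dots> = exp (\<i> * of_real (arctan (2*nu) + Tn (Suc n)))"
      unfolding Suc.IH by (simp add: Tn_def k_def exp_add[symmetric] algebra_simps)
    finally show ?case .
  qed
  have l1: "(\<lambda>n. sgn (c n)) \<longlonglongrightarrow> sgn B" using lim Bn by (rule tendsto_sgn)
  have l2: "(\<lambda>n. exp (\<i> * of_real (arctan (2*nu) + Tn n))) \<longlonglongrightarrow> exp (\<i> * of_real (arctan (2*nu) + (\<Sum>n. arctan (tt nu (real n + 1)))))"
  proof -
    have "Tn \<longlonglongrightarrow> (\<Sum>n. arctan (tt nu (real n + 1)))"
      unfolding Tn_def[abs_def] by (rule summable_LIMSEQ[OF sumT])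
    hence "(\<lambda>n. arctan (2*nu) + Tn n) \<longlonglongrightarrow> arctan (2*nu) + (\<Sum>n. arctan (tt nu (real n + 1)))"
      by (rule tendsto_add[OF tendsto_const])
    hence "(\<lambda>n. complex_of_real (arctan (2*nu) + Tn n)) \<longlonglongrightarrow> complex_of_real (arctan (2*nu) + (\<Sum>n. arctan (tt nu (real n + 1))))"
      by (rule tendsto_of_real)
    hence "(\<lambda>n. \<i> * complex_of_real (arctan (2*nu) + Tn n)) \<longlonglongrightarrow> \<i> * complex_of_real (arctan (2*nu) + (\<Sum>n. arctan (tt nu (real n + 1))))"
      by (rule tendsto_mult[OF tendsto_const])
    thus ?thesis by (rule tendsto_exp)
  qed
  have l1': "(\<lambda>n. exp (\<i> * of_real (arctan (2*nu) + Tn n))) \<longlonglongrightarrow> sgn B"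
    using l1 unfolding step .
  have "sgn B = exp (\<i> * of_real (arctan (2*nu) + (\<Sum>n. arctan (tt nu (real n + 1)))))"
    by (rule LIMSEQ_unique[OF l1' l2])
  thus ?thesis by (simp only: B_def z_def)
qed

lemma q_sq:
  fixes nu :: real assumes nu: "0 < nu"
  shows "((1/2 - \<i> * complex_of_real nu)/((1/2 - \<i> * complex_of_real nu) - 1))^2
         = exp (- 4 * \<i> * of_real (arctan (2*nu)))"
proof -
  define a where "a = 1/2 + \<i> * complex_of_real nu"
  define al where "al = arctan (2*nu)"
  have an: "a \<noteq> 0" unfolding a_def by (simp add: complex_eq_iff)
  have "sgn a = exp (\<i> * of_real (arctan (Im a / Re a)))" by (rule sgn_polar) (simp add: a_def)
  also have "Im a / Re a = 2*nu" by (simp add: a_def)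
  finally have sa: "sgn a = exp (\<i> * of_real al)" unfolding al_def .
  define N where "N = norm a"
  have a_eq: "a = of_real N * exp (\<i> * of_real al)"
    using an sa unfolding N_def by (simp add: sgn_eq field_simps)
  have ca: "cnj a = of_real N * exp (- \<i> * of_real al)"
    by (subst a_eq) (simp add: exp_cnj)
  have z: "1/2 - \<i> * complex_of_real nu = cnj a" unfolding a_def by (simp add: complex_eq_iff)
  have z1: "(1/2 - \<i> * complex_of_real nu) - 1 = - a" unfolding a_def by (simp add: complex_eq_iff)
  have nn: "N \<noteq> 0" using an unfolding N_def by simp
  have "(1/2 - \<i> * complex_of_real nu)/((1/2 - \<i> * complex_of_real nu) - 1) = cnj a / (- a)"
    unfolding z1 unfolding z ..
  also have "\<dots> = - (exp (- \<i> * of_real al) / exp (\<i> * of_real al))"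
    unfolding ca unfolding a_eq using nn by simp
  also have "\<dots> = - exp (- 2 * \<i> * of_real al)" by (simp add: exp_diff[symmetric] algebra_simps)
  finally have "((1/2 - \<i> * complex_of_real nu)/((1/2 - \<i> * complex_of_real nu) - 1))^2 = (exp (- 2 * \<i> * of_real al))^2"
    by simp
  also have "\<dots> = exp (- 4 * \<i> * of_real al)" by (simp add: power2_eq_square exp_add[symmetric] mult.assoc)
  finally show ?thesis unfolding al_def .
qed



lemma exp_mi: "exp (- \<i> * complex_of_real pi / 2) = - \<i>"
  by (rule complex_eqI) (simp_all add: Re_exp Im_exp)

lemma zs1_eq: "zero_seq1 nu d k = - \<i> * complex_of_real (exp (- Re d / nu - real k * pi / nu))"
  unfolding zero_seq1_def exp_mi exp_of_real by simp

lemma negi_exp: "- \<i> * complex_of_real (exp r) = exp (complex_of_real r - \<i> * complex_of_real (pi/2))"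
proof -
  have "exp (complex_of_real r - \<i> * complex_of_real (pi/2)) = exp (complex_of_real r) * exp (- \<i> * complex_of_real pi / 2)"
    by (simp add: exp_diff exp_minus field_simps flip: exp_add)
  thus ?thesis unfolding exp_mi by (simp add: exp_of_real)
qed

lemma Ln_negi: "Ln (- \<i> * complex_of_real (exp r)) = complex_of_real r - \<i> * complex_of_real (pi/2)"
  unfolding negi_exp by (rule Ln_exp) (simp_all, use pi_gt_zero in linarith)

lemma W_eqs:
  fixes nu r :: real and d :: complex
  assumes imd: "Im d = pi*nu/2"
  defines "x \<equiv> - \<i> * complex_of_real (exp r)"
  shows "exp (2 * \<i> * d) * cpow x (2 * \<i> * of_real nu) = exp (2 * \<i> * of_real (Re d + nu * r))"
    and "exp (- 2 * \<i> * d) * cpow x (- 2 * \<i> * of_real nu) = 1 / exp (2 * \<i> * of_real (Re d + nu * r))"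
proof -
  have dd: "d = complex_of_real (Re d) + \<i> * complex_of_real (pi*nu/2)" using imd by (simp add: complex_eq_iff)
  have L: "Ln x = complex_of_real r - \<i> * complex_of_real (pi/2)" unfolding x_def by (rule Ln_negi)
  show "exp (2 * \<i> * d) * cpow x (2 * \<i> * of_real nu) = exp (2 * \<i> * of_real (Re d + nu * r))"
    unfolding cpow_def L exp_add[symmetric] by (subst dd) (simp add: algebra_simps)
  have "exp (- 2 * \<i> * d) * cpow x (- 2 * \<i> * of_real nu) = exp (- (2 * \<i> * of_real (Re d + nu * r)))"
    unfolding cpow_def L exp_add[symmetric] by (subst dd) (simp add: algebra_simps)
  thus "exp (- 2 * \<i> * d) * cpow x (- 2 * \<i> * of_real nu) = 1 / exp (2 * \<i> * of_real (Re d + nu * r))"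
    by (simp add: exp_minus inverse_eq_divide)
qed

lemma y1_W:
  fixes nu r :: real and d W :: complex
  assumes imd: "Im d = pi*nu/2" and W: "W = exp (2 * \<i> * of_real (Re d + nu * r))"
    and nu: "nu \<noteq> 0"
    and WW: "(3 - 2 * \<i> * of_real nu)^2 / W + (3 + 2 * \<i> * of_real nu)^2 * W = 2 * (9 - 4 * of_real nu ^ 2)"
  shows "y1 nu d (- \<i> * complex_of_real (exp r)) = 0"
proof -
  define x where "x = - \<i> * complex_of_real (exp r)"
  have e1: "exp (2 * \<i> * d) * cpow x (2 * \<i> * of_real nu) = W"
    unfolding x_def W by (rule W_eqs(1)[OF imd])
  have e2: "exp (- 2 * \<i> * d) * cpow x (- 2 * \<i> * of_real nu) = 1 / W"
    unfolding x_def W by (rule W_eqs(2)[OF imd])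
  have Wn: "W \<noteq> 0" unfolding W by simp
  have "y1 nu d x = (3 - 2 * \<i> * of_real nu) ^ 2 / (16 * of_real nu ^ 2) * (exp (- 2 * \<i> * d) * cpow x (- 2 * \<i> * of_real nu))
     - (9 - 4 * of_real nu ^ 2) / (8 * of_real nu ^ 2)
     + (3 + 2 * \<i> * of_real nu) ^ 2 / (16 * of_real nu ^ 2) * (exp (2 * \<i> * d) * cpow x (2 * \<i> * of_real nu))"
    unfolding y1_def by (simp only: mult.assoc)
  also have "\<dots> = ((3 - 2 * \<i> * of_real nu)^2 / W + (3 + 2 * \<i> * of_real nu)^2 * W) / (16 * of_real nu ^ 2)
     - (9 - 4 * of_real nu ^ 2) / (8 * of_real nu ^ 2)"
    unfolding e1 e2 using Wn nu by (simp add: field_simps)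
  also have "\<dots> = 0" unfolding WW using nu by (simp add: field_simps)
  finally show ?thesis unfolding x_def .
qed

lemma exp_int_pi: "exp (2 * \<i> * complex_of_real (- (real k * pi))) = 1"
proof -
  have "2 * \<i> * complex_of_real (- (real k * pi)) = - (of_nat k * (2 * of_real pi * \<i>))"
    by (simp add: algebra_simps)
  thus ?thesis by (simp only: exp_minus exp_of_nat_mult exp_two_pi_i) simp
qed

lemma sq_swap: "(a::complex) \<noteq> 0 \<Longrightarrow> b \<noteq> 0 \<Longrightarrow> a^2/(a/b)^2 + b^2*(a/b)^2 = b^2 + a^2"
  by (simp add: power_divide)

lemma norm_negi: "norm (- \<i> * complex_of_real (exp t)) = exp t"
  by (simp add: norm_mult)

lemma zeros_all:
  fixes nu :: real and d :: complex
  assumes nu: "nu > 0" and imd: "Im d = pi*nu/2"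
  shows "(\<forall>k. y1 nu d (zero_seq1 nu d k) = 0 \<and> y1 nu d (zero_seq2 nu d k) = 0)
    \<and> (\<forall>k. zero_seq2 nu d k = zero_seq1 nu d k
              * exp (of_real (1 / nu * Arg ((3 - 2 * \<i> * of_real nu) / (3 + 2 * \<i> * of_real nu)))))
    \<and> (\<forall>k. norm (zero_seq1 nu d k) \<le> norm (zero_seq1 nu d 0)
           \<and> norm (zero_seq2 nu d k) \<le> norm (zero_seq1 nu d 0))
    \<and> (\<forall>k. Re (zero_seq1 nu d k) = 0 \<and> Im (zero_seq1 nu d k) < 0
           \<and> Re (zero_seq2 nu d k) = 0 \<and> Im (zero_seq2 nu d k) < 0)
    \<and> inj (zero_seq1 nu d) \<and> inj (zero_seq2 nu d)
    \<and> zero_seq1 nu d \<longlonglongrightarrow> 0 \<and> zero_seq2 nu d \<longlonglongrightarrow> 0"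
    and "norm (zero_seq1 nu d 0) = exp (- Re d / nu)"
proof -
  define wq where "wq = (3 - 2 * \<i> * complex_of_real nu) / (3 + 2 * \<i> * complex_of_real nu)"
  define th where "th = Arg wq"
  define rho where "rho k = - Re d / nu - real k * pi / nu" for k :: nat
  have nz: "3 + 2 * \<i> * complex_of_real nu \<noteq> 0" "3 - 2 * \<i> * complex_of_real nu \<noteq> 0"
    by (simp_all add: complex_eq_iff)
  have nw: "norm wq = 1"
  proof -
    have "cnj (3 + 2 * \<i> * complex_of_real nu) = 3 - 2 * \<i> * complex_of_real nu" by (simp add: complex_eq_iff)
    hence "norm (3 - 2 * \<i> * complex_of_real nu) = norm (3 + 2 * \<i> * complex_of_real nu)"
      by (metis complex_mod_cnj)
    thus ?thesis unfolding wq_def using nz by (simp add: norm_divide)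
  qed
  have wn: "wq \<noteq> 0" using nw by auto
  have Lnw: "Ln wq = \<i> * complex_of_real th" unfolding th_def using Ln_Arg[OF wn] nw by simp
  have wexp: "wq = exp (\<i> * complex_of_real th)" unfolding th_def using Arg_eq[OF wn] nw by simp
  have imw: "Im wq < 0"
  proof -
    have "wq = ((3 - 2 * \<i> * complex_of_real nu) * (3 - 2 * \<i> * complex_of_real nu))
              / ((3 + 2 * \<i> * complex_of_real nu) * (3 - 2 * \<i> * complex_of_real nu))"
      unfolding wq_def using nz by simp
    also have "(3 + 2 * \<i> * complex_of_real nu) * (3 - 2 * \<i> * complex_of_real nu) = complex_of_real (9 + 4*nu^2)"
      by (simp add: algebra_simps power2_eq_square)
    finally have "wq = (3 - 2 * \<i> * complex_of_real nu)^2 / complex_of_real (9 + 4*nu^2)"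
      by (simp add: power2_eq_square)
    hence "Im wq = - 12 * nu / (9 + 4*nu^2)" by (simp add: power2_eq_square Im_divide_of_real)
    thus ?thesis using nu by (simp add: add_pos_nonneg)
  qed
  have thneg: "th \<le> 0" unfolding th_def using imw Arg_less_0[of wq] by linarith
  have fac: "exp (- \<i> / complex_of_real nu * Ln wq) = complex_of_real (exp (1 / nu * th))"
    unfolding Lnw using nu by (simp add: exp_of_real[symmetric] field_simps)
  have zs1: "zero_seq1 nu d k = - \<i> * complex_of_real (exp (rho k))" for k
    unfolding zs1_eq rho_def ..
  have zs2: "zero_seq2 nu d k = - \<i> * complex_of_real (exp (rho k + th / nu))" for k
    unfolding zero_seq2_def zs1 wq_def[symmetric] fac by (simp add: exp_add)
  have c3: "zero_seq2 nu d k = zero_seq1 nu d k * exp (of_real (1 / nu * Arg ((3 - 2 * \<i> * of_real nu) / (3 + 2 * \<i> * of_real nu))))" for k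
    unfolding zero_seq2_def wq_def[symmetric] th_def[symmetric] fac exp_of_real ..
  have rd: "Re d + nu * rho k = - (real k * pi)" for k unfolding rho_def using nu by (simp add: field_simps)
  have y1a: "y1 nu d (zero_seq1 nu d k) = 0" for k
    unfolding zs1
  proof (rule y1_W[OF imd refl])
    show "nu \<noteq> 0" using nu by simp
    show "(3 - 2 * \<i> * of_real nu)^2 / exp (2 * \<i> * complex_of_real (Re d + nu * rho k)) + (3 + 2 * \<i> * of_real nu)^2 * exp (2 * \<i> * complex_of_real (Re d + nu * rho k)) = 2 * (9 - 4 * of_real nu ^ 2)"
      unfolding rd exp_int_pi by (simp add: power2_eq_square algebra_simps)
  qed
  have y1b: "y1 nu d (zero_seq2 nu d k) = 0" for k
    unfolding zs2
  proof (rule y1_W[OF imd refl])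
    show "nu \<noteq> 0" using nu by simp
    have "nu * (rho k + th / nu) = nu * rho k + th" using nu by (simp add: distrib_left)
    hence rd2: "Re d + nu * (rho k + th / nu) = - (real k * pi) + th" using rd[of k] by linarith
    have W: "exp (2 * \<i> * complex_of_real (Re d + nu * (rho k + th / nu))) = wq^2"
    proof -
      have "exp (2 * \<i> * complex_of_real (Re d + nu * (rho k + th / nu)))
          = exp (2 * \<i> * complex_of_real (- (real k * pi))) * exp (\<i> * complex_of_real th) ^ 2"
        unfolding rd2 by (simp add: exp_add[symmetric] power2_eq_square algebra_simps)
      thus ?thesis unfolding exp_int_pi wexp[symmetric] by simp
    qed
    show "(3 - 2 * \<i> * of_real nu)^2 / exp (2 * \<i> * complex_of_real (Re d + nu * (rho k + th / nu))) + (3 + 2 * \<i> * of_real nu)^2 * exp (2 * \<i> * complex_of_real (Re d + nu * (rho k + th / nu))) = 2 * (9 - 4 * of_real nu ^ 2)"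
      unfolding W wq_def sq_swap[OF nz(2) nz(1)] by (simp add: power2_eq_square algebra_simps)
  qed
  have rmono: "rho k \<le> rho 0" for k unfolding rho_def using nu by (simp add: divide_nonneg_pos)
  have c4: "norm (zero_seq1 nu d k) \<le> norm (zero_seq1 nu d 0) \<and> norm (zero_seq2 nu d k) \<le> norm (zero_seq1 nu d 0)" for k
  proof -
    have "rho k + th / nu \<le> rho 0" using rmono[of k] thneg nu by (smt (verit) divide_nonpos_pos)
    thus ?thesis unfolding zs1 zs2 norm_negi using rmono[of k] by simp
  qed
  have c5: "Re (zero_seq1 nu d k) = 0 \<and> Im (zero_seq1 nu d k) < 0 \<and> Re (zero_seq2 nu d k) = 0 \<and> Im (zero_seq2 nu d k) < 0" for k
    unfolding zs1 zs2 by simp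
  have rinj: "rho k = rho j \<Longrightarrow> k = j" for k j unfolding rho_def using nu by (simp add: field_simps)
  have i1: "inj (zero_seq1 nu d)"
  proof (rule injI)
    fix k j assume "zero_seq1 nu d k = zero_seq1 nu d j"
    hence "exp (rho k) = exp (rho j)" unfolding zs1 by (simp add: complex_eq_iff)
    thus "k = j" using rinj by simp
  qed
  have i2: "inj (zero_seq2 nu d)"
  proof (rule injI)
    fix k j assume "zero_seq2 nu d k = zero_seq2 nu d j"
    hence "exp (rho k + th/nu) = exp (rho j + th/nu)" unfolding zs2 by (simp add: complex_eq_iff)
    thus "k = j" using rinj by simp
  qed
  have rexp: "exp (rho k) = exp (rho 0) * exp (- pi / nu) ^ k" for k
  proof -
    have "rho k = rho 0 + real k * (- pi / nu)" unfolding rho_def by (simp add: field_simps)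
    hence "exp (rho k) = exp (rho 0) * exp (real k * (- pi / nu))" by (simp only: exp_add)
    moreover have "exp (real k * (- pi / nu)) = exp (- pi / nu) ^ k" by (rule exp_of_nat_mult)
    ultimately show ?thesis by simp
  qed
  have q1: "norm (complex_of_real (exp (- pi / nu))) < 1" using nu by simp
  have l1: "zero_seq1 nu d \<longlonglongrightarrow> 0"
  proof -
    have "zero_seq1 nu d = (\<lambda>k. (- \<i> * complex_of_real (exp (rho 0))) * complex_of_real (exp (- pi / nu)) ^ k)"
    proof
      fix k show "zero_seq1 nu d k = (- \<i> * complex_of_real (exp (rho 0))) * complex_of_real (exp (- pi / nu)) ^ k"
        unfolding zs1 rexp[of k] by simp
    qed
    moreover have "(\<lambda>k. (- \<i> * complex_of_real (exp (rho 0))) * complex_of_real (exp (- pi / nu)) ^ k) \<longlonglongrightarrow> 0"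
      by (rule tendsto_mult_right_zero[OF LIMSEQ_power_zero[OF q1]])
    ultimately show ?thesis by simp
  qed
  have l2: "zero_seq2 nu d \<longlonglongrightarrow> 0"
  proof -
    have "zero_seq2 nu d = (\<lambda>k. (- \<i> * complex_of_real (exp (rho 0 + th/nu))) * complex_of_real (exp (- pi / nu)) ^ k)"
    proof
      fix k show "zero_seq2 nu d k = (- \<i> * complex_of_real (exp (rho 0 + th/nu))) * complex_of_real (exp (- pi / nu)) ^ k"
        unfolding zs2 exp_add rexp[of k] by simp
    qed
    moreover have "(\<lambda>k. (- \<i> * complex_of_real (exp (rho 0 + th/nu))) * complex_of_real (exp (- pi / nu)) ^ k) \<longlonglongrightarrow> 0"
      by (rule tendsto_mult_right_zero[OF LIMSEQ_power_zero[OF q1]])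
    ultimately show ?thesis by simp
  qed
  show "norm (zero_seq1 nu d 0) = exp (- Re d / nu)" unfolding zs1 norm_negi rho_def by simp
  show "(\<forall>k. y1 nu d (zero_seq1 nu d k) = 0 \<and> y1 nu d (zero_seq2 nu d k) = 0)
    \<and> (\<forall>k. zero_seq2 nu d k = zero_seq1 nu d k
              * exp (of_real (1 / nu * Arg ((3 - 2 * \<i> * of_real nu) / (3 + 2 * \<i> * of_real nu)))))
    \<and> (\<forall>k. norm (zero_seq1 nu d k) \<le> norm (zero_seq1 nu d 0)
           \<and> norm (zero_seq2 nu d k) \<le> norm (zero_seq1 nu d 0))
    \<and> (\<forall>k. Re (zero_seq1 nu d k) = 0 \<and> Im (zero_seq1 nu d k) < 0
           \<and> Re (zero_seq2 nu d k) = 0 \<and> Im (zero_seq2 nu d k) < 0)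
    \<and> inj (zero_seq1 nu d) \<and> inj (zero_seq2 nu d)
    \<and> zero_seq1 nu d \<longlonglongrightarrow> 0 \<and> zero_seq2 nu d \<longlonglongrightarrow> 0"
    using y1a y1b c3 c4 c5 i1 i2 l1 l2 by blast
qed



theorem proposition8:
  fixes nu :: real and d :: complex
  assumes nu_pos: "nu > 0"
    and p0x: "- 7 = - 2 * cosh (2 * pi * nu)"
    and d_const: "is_integration_constant_d (-1) (-7) (-7) nu d"
    and d_norm: "0 \<le> Re d" "Re d \<le> pi"
  shows "Im d / nu = pi / 2
    \<and> (\<forall>k. y1 nu d (zero_seq1 nu d k) = 0 \<and> y1 nu d (zero_seq2 nu d k) = 0)
    \<and> (\<forall>k. zero_seq2 nu d k = zero_seq1 nu d k
              * exp (of_real (1 / nu * Arg ((3 - 2 * \<i> * of_real nu) / (3 + 2 * \<i> * of_real nu)))))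
    \<and> (\<forall>k. norm (zero_seq1 nu d k) \<le> norm (zero_seq1 nu d 0)
           \<and> norm (zero_seq2 nu d k) \<le> norm (zero_seq1 nu d 0))
    \<and> (\<forall>k. Re (zero_seq1 nu d k) = 0 \<and> Im (zero_seq1 nu d k) < 0
           \<and> Re (zero_seq2 nu d k) = 0 \<and> Im (zero_seq2 nu d k) < 0)
    \<and> inj (zero_seq1 nu d) \<and> inj (zero_seq2 nu d)
    \<and> zero_seq1 nu d \<longlonglongrightarrow> 0 \<and> zero_seq2 nu d \<longlonglongrightarrow> 0
    \<and> 0.0291 \<le> norm (zero_seq1 nu d 0) \<and> norm (zero_seq1 nu d 0) < 0.0292"
proof -
  note hyp = hyper_facts[OF nu_pos p0x]
  note nb = nu_bounds[OF hyp(1)]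
  note Tb = T_bounds[OF nb]
  define T where "T = TT nu"
  define al where "al = arctan (2*nu)"
  define h where "h = (3 + sqrt 5) / (2::real)"
  define S where "S = sinh (2*pi*nu)"
  define z where "z = 1/2 - \<i> * complex_of_real nu"
  define B where "B = Gamma z ^ 2 / Gamma (2*z)"
  have Tl: "0.243727 \<le> T" and Th: "T \<le> 0.24381" using Tb unfolding T_def by auto
  have Sv: "S = 3 * sqrt 5 / 2" unfolding S_def using hyp(5) .
  have Spos: "S > 0" unfolding Sv by simp
  have G1n: "(norm (Gamma z))^2 = 2*pi/3" unfolding z_def G1_norm hyp(2) by simp
  have G3n: "(norm (Gamma (2*z)))^2 = 2*pi*nu/S"
  proof -
    have "2*z = 1 - 2 * \<i> * complex_of_real nu" unfolding z_def by (simp add: algebra_simps)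
    thus ?thesis using G3_norm[OF nu_pos] unfolding S_def by simp
  qed
  have Bz: "B \<noteq> 0"
  proof -
    have "Im z \<noteq> 0" "Im (2*z) \<noteq> 0" unfolding z_def using nu_pos by simp_all
    thus ?thesis unfolding B_def by (simp add: Gamma_eq_zero_iff notnpi)
  qed
  have nB4: "(norm B)^4 = 5 * pi^2 / (9 * nu^2)"
  proof -
    have "(norm B)^4 = ((norm (Gamma z))^2)^4 / ((norm (Gamma (2*z)))^2)^2"
      unfolding B_def by (simp add: norm_divide norm_power power_divide flip: power_mult)
    also have "\<dots> = (2*pi/3)^4 / (2*pi*nu/S)^2" unfolding G1n G3n ..
    also have "\<dots> = 5 * pi^2 / (9 * nu^2)" unfolding Sv using nu_pos
      by (simp add: field_simps power2_eq_square power4_eq_xxxx)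
    finally show ?thesis .
  qed
  have sB: "sgn B = exp (\<i> * of_real (al + T))"
    unfolding B_def z_def al_def T_def TT_def by (rule B_phase[OF nu_pos Tb(1)])
  have Bpol: "B = of_real (norm B) * exp (\<i> * of_real (al + T))"
    using Bz sB by (simp add: sgn_eq field_simps)
  have Bv: "1/2 * (exp (2 * pi * nu) * (-7) - (-7)) * sinh (2 * pi * nu) + (cos (2 * pi * (-1)) + 1) * (exp (2 * pi * nu) + 1)
      = - 81 * (3 + sqrt 5) / 8"
  proof -
    have c: "cos (2 * pi * (-1::real)) = 1" by simp
    show ?thesis unfolding c hyp(4) hyp(5) by (simp add: algebra_simps) argo
  qed
  have A1: "d_argument (-1) (-7) (-7) nu =
      of_real (nu^2 / (pi^2 * S^2)) * exp (- 4 * \<i> * of_real al) * B^4 * of_real (- 81 * (3 + sqrt 5) / 8)"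
    using A_formula[OF nu_pos, of "-7" "-7", unfolded Bv q_sq[OF nu_pos]]
    unfolding B_def z_def S_def al_def .
  have K: "nu^2 / (pi^2 * S^2) * (5 * pi^2 / (9 * nu^2)) * (- 81 * (3 + sqrt 5) / 8) = - h"
    unfolding Sv h_def using nu_pos by (simp add: field_simps power2_eq_square)
  have A2: "d_argument (-1) (-7) (-7) nu = exp (complex_of_real (pi*nu) + \<i> * complex_of_real (4*T - pi))"
  proof -
    have "d_argument (-1) (-7) (-7) nu = of_real (nu^2 / (pi^2 * S^2) * (norm B)^4 * (- 81 * (3 + sqrt 5) / 8))
          * (exp (- 4 * \<i> * of_real al) * exp (\<i> * of_real (al + T))^4)"
      unfolding A1 by (subst Bpol) (simp add: power_mult_distrib algebra_simps)
    also have "exp (- 4 * \<i> * of_real al) * exp (\<i> * of_real (al + T))^4 = exp (4 * \<i> * of_real T)"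
      by (simp add: exp_of_nat_mult[symmetric] exp_add[symmetric] algebra_simps)
    also have "nu^2 / (pi^2 * S^2) * (norm B)^4 * (- 81 * (3 + sqrt 5) / 8) = - h" unfolding nB4 using K .
    also have "complex_of_real (- h) * exp (4 * \<i> * of_real T) = exp (complex_of_real (pi*nu) + \<i> * complex_of_real (4*T - pi))"
    proof -
      have "exp (complex_of_real (pi*nu) + \<i> * complex_of_real (4*T - pi)) = exp (complex_of_real (pi*nu)) * exp (4 * \<i> * of_real T) * exp (- \<i> * of_real pi)"
        by (simp add: exp_add[symmetric] algebra_simps)
      also have "exp (- \<i> * complex_of_real pi) = -1" by (simp add: exp_minus)
      also have "exp (complex_of_real (pi*nu)) = of_real h" unfolding exp_of_real hyp(1) h_def ..
      finally show ?thesis by simp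
    qed
    finally show ?thesis .
  qed
  have LnA: "Ln (d_argument (-1) (-7) (-7) nu) = complex_of_real (pi*nu) + \<i> * complex_of_real (4*T - pi)"
    unfolding A2 by (rule Ln_exp) (use Tl Th pi_approx in simp_all)
  obtain n :: int where dn: "d = \<i> / 2 * Ln (d_argument (-1) (-7) (-7) nu) + of_int n * of_real pi"
    using d_const unfolding is_integration_constant_d_def by blast
  have Red: "Re d = pi/2 - 2*T + n * pi" unfolding dn LnA by (simp add: algebra_simps)
  have Imd: "Im d = pi*nu/2" unfolding dn LnA by simp
  have pb: "(314::real)/100 \<le> pi" "pi \<le> (315::real)/100" using pi_approx by simp_all
  have Tb2: "(24::real)/100 \<le> T" "T \<le> (1::real)/4" using Tl Th by simp_all
  have n0: "n = 0"
  proof (rule ccontr)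
    assume "n \<noteq> 0"
    hence "n \<ge> 1 \<or> n \<le> -1" by linarith
    thus False
    proof
      assume "n \<ge> 1"
      hence "real_of_int n * pi \<ge> pi" using pi_gt_zero by (simp add: mult_right_mono)
      thus False using Red d_norm(2) Tb2 pb by linarith
    next
      assume "n \<le> -1"
      hence "real_of_int n * pi \<le> - pi" using pi_gt_zero
        by (metis mult_minus_left mult_right_mono of_int_le_iff of_int_minus of_int_1 less_le mult_1)
      thus False using Red d_norm(1) Tb2 pb by linarith
    qed
  qed
  have Red0: "Re d = pi/2 - 2*T" using Red n0 by simp
  note Z = zeros_all[OF nu_pos Imd]
  have c1: "Im d / nu = pi / 2" unfolding Imd using nu_pos by simp
  have e: "exp (- Re d / nu) = exp (-((pi/2 - 2*T)/nu))" unfolding Red0 by (simp add: minus_divide_left)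
  note F = final_num[OF nb Tl Th]
  show ?thesis using c1 Z(1) F unfolding Z(2) e by blast
qed


end
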